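(* Suppose $\mathcal{Y}=\mathcal{W}^\ast+\mathcal{E}$ with $\mathcal{W}^\ast=\sum_{k=1}^K\mathcal{W}^{\ast(k)}$, where $\bar r_k=\mathrm{rank}(\boldsymbol{W}^{\ast(k)}_{(k)})$, and assume $\|\boldsymbol{W}^{\ast(l)}_{(k)}\|_{S_\infty}\le\alpha$ for all $k\neq l$. Let $(\hat{\mathcal{W}}^{(1)},\dots,\hat{\mathcal{W}}^{(K)})$ be any solution of $$\min_{\mathcal{W}^{(1)},\dots,\mathcal{W}^{(K)}}\ \tfrac12\Bigl\|\mathcal{Y}-\sum_{k=1}^K\mathcal{W}^{(k)}\Bigr\|_F^2+\lambda\sum_{k=1}^K\|\boldsymbol{W}^{(k)}_{(k)}\|_{S_1}\quad\text{s.t. } \|\boldsymbol{W}^{(k)}_{(l)}\|_{S_\infty}\le\alpha\ \ \forall\, l\neq k,$$ and $\hat{\mathcal{W}}=\sum_k\hat{\mathcal{W}}^{(k)}$. If $\lambda\ge 2\|\mathcal{E}\|_{\underline{S_\infty/\infty}}+\alpha(K-1)$, then there is a universal constant $c$ such that $$\sum_{k=1}^K\|\hat{\mathcal{W}}^{(k)}-\mathcal{W}^{\ast(k)}\|_F^2\le c\,\lambda^2\sum_{k=1}^K\bar r_k .$$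
   Context: Tensors are elements of $\mathbb{R}^{n_1\times\cdots\times n_K}$ with $N=\prod_k n_k$; $\|\cdot\|_F$ is the Euclidean norm of the vectorization. For a tensor $\mathcal{W}$, $\boldsymbol{W}_{(k)}\in\mathbb{R}^{n_k\times N/n_k}$ is its mode-$k$ unfolding (columns are the mode-$k$ fibers); for a tensor $\mathcal{W}^{(l)}$, $\boldsymbol{W}^{(l)}_{(k)}$ is its mode-$k$ unfolding. $\|\cdot\|_{S_1}$ is the trace norm and $\|\cdot\|_{S_\infty}$ the spectral norm. $\|\mathcal{E}\|_{\underline{S_\infty/\infty}}=\max_k\|\boldsymbol{E}_{(k)}\|_{S_\infty}$. $\alpha\ge0$, $\lambda>0$. *)

theory Defs
  imports Complex_Main "Jordan_Normal_Form.DL_Rank"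
begin

text \<open>Tensors of order K with mode sizes n 0, ..., n (K-1) (modes are indexed from 0).
  A multi-index is a function nat => nat; a tensor is a real-valued function on multi-indices,
  only its values on tensor_idx K n matter.\<close>

type_synonym tensor = "(nat \<Rightarrow> nat) \<Rightarrow> real"

definition tensor_idx :: "nat \<Rightarrow> (nat \<Rightarrow> nat) \<Rightarrow> (nat \<Rightarrow> nat) set" where
  "tensor_idx K n = {i. (\<forall>k<K. i k < n k) \<and> (\<forall>k\<ge>K. i k = 0)}"

definition frob :: "nat \<Rightarrow> (nat \<Rightarrow> nat) \<Rightarrow> tensor \<Rightarrow> real" where
  "frob K n T = sqrt (\<Sum>i\<in>tensor_idx K n. (T i)\<^sup>2)"

text \<open>Mode-k unfold_mode: row index = i_k, column index j encodes the remaining indices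
  in mixed radix (earlier modes vary fastest), j = sum_{m<>k} i_m * prod_{l<m, l<>k} n_l.\<close>

definition unfold_idx :: "nat \<Rightarrow> (nat \<Rightarrow> nat) \<Rightarrow> nat \<Rightarrow> nat \<Rightarrow> nat \<Rightarrow> (nat \<Rightarrow> nat)" where
  "unfold_idx K n k r j = (\<lambda>m. if m = k then r
      else if m < K then (j div (\<Prod>l\<in>{l. l < m \<and> l \<noteq> k}. n l)) mod n m else 0)"

definition unfold_mode :: "nat \<Rightarrow> (nat \<Rightarrow> nat) \<Rightarrow> tensor \<Rightarrow> nat \<Rightarrow> real mat" where
  "unfold_mode K n T k = mat (n k) (\<Prod>l\<in>{l. l < K \<and> l \<noteq> k}. n l)
      (\<lambda>(r, j). T (unfold_idx K n k r j))"

definition mrank :: "real mat \<Rightarrow> nat" where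
  "mrank A = vec_space.rank (dim_row A) A"

definition spec_norm :: "real mat \<Rightarrow> real" where
  "spec_norm A = Sup {sqrt (\<Sum>i<dim_row A. (\<Sum>j<dim_col A. A $$ (i, j) * x j)\<^sup>2) | x.
                        (\<Sum>j<dim_col A. (x j)\<^sup>2) \<le> 1}"

text \<open>Positive semidefinite square root and trace norm: tr sqrt(A^T A) = sum of singular values.\<close>
definition psd :: "real mat \<Rightarrow> bool" where
  "psd B \<longleftrightarrow> B = transpose_mat B \<and> (\<forall>v \<in> carrier_vec (dim_row B). 0 \<le> v \<bullet> (B *\<^sub>v v))"

definition mtrace :: "real mat \<Rightarrow> real" where
  "mtrace B = (\<Sum>i<dim_row B. B $$ (i, i))"

definition trace_norm :: "real mat \<Rightarrow> real" where
  "trace_norm A = mtrace (THE B. B \<in> carrier_mat (dim_col A) (dim_col A) \<and> psd B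
                               \<and> B * B = transpose_mat A * A)"

end

theory Submission
  imports Defs "Jordan_Normal_Form.Char_Poly"
begin

definition ip :: "nat \<Rightarrow> (nat \<Rightarrow> real) \<Rightarrow> (nat \<Rightarrow> real) \<Rightarrow> real" where
  "ip n x y = (\<Sum>i<n. x i * y i)"

definition orthon :: "nat \<Rightarrow> nat \<Rightarrow> (nat \<Rightarrow> nat \<Rightarrow> real) \<Rightarrow> bool" where
  "orthon n p v \<longleftrightarrow> (\<forall>i<p. \<forall>j<p. ip n (v i) (v j) = (if i = j then 1 else 0))"

definition lc :: "nat \<Rightarrow> (nat \<Rightarrow> real) \<Rightarrow> (nat \<Rightarrow> nat \<Rightarrow> real) \<Rightarrow> nat \<Rightarrow> real" where
  "lc p c v = (\<lambda>t. \<Sum>i<p. c i * v i t)"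

lemma ip_sym: "ip n x y = ip n y x"
  unfolding ip_def by (simp add: mult.commute)

lemma ip_nonneg: "0 \<le> ip n x x"
  unfolding ip_def by (auto intro: sum_nonneg)

lemma ip_cong: "(\<And>t. t < n \<Longrightarrow> x t = x' t) \<Longrightarrow> (\<And>t. t < n \<Longrightarrow> y t = y' t) \<Longrightarrow> ip n x y = ip n x' y'"
  unfolding ip_def by auto

lemma ip_zero_iff: "ip n x x = 0 \<longleftrightarrow> (\<forall>t<n. x t = 0)"
  unfolding ip_def by (subst sum_nonneg_eq_0_iff) auto

lemma ip_add_right: "ip n x (\<lambda>t. y t + z t) = ip n x y + ip n x z"
  unfolding ip_def by (simp add: distrib_left sum.distrib)
lemma ip_diff_right: "ip n x (\<lambda>t. y t - z t) = ip n x y - ip n x z"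
  unfolding ip_def by (simp add: right_diff_distrib sum_subtractf)
lemma ip_scale_right: "ip n x (\<lambda>t. a * y t) = a * ip n x y"
  unfolding ip_def by (simp add: sum_distrib_left ac_simps)
lemma ip_add_left: "ip n (\<lambda>t. y t + z t) x = ip n y x + ip n z x"
  unfolding ip_def by (simp add: distrib_right sum.distrib)
lemma ip_diff_left: "ip n (\<lambda>t. y t - z t) x = ip n y x - ip n z x"
  unfolding ip_def by (simp add: left_diff_distrib sum_subtractf)
lemma ip_scale_left: "ip n (\<lambda>t. a * y t) x = a * ip n y x"
  unfolding ip_def by (simp add: sum_distrib_left ac_simps)

lemma ip_lc_right: "ip n x (lc p c v) = (\<Sum>i<p. c i * ip n x (v i))"
  unfolding ip_def lc_def by (simp add: sum_distrib_left sum_distrib_right ac_simps sum.swap[of _ "{..<n}"])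

lemma ip_lc_left: "ip n (lc p c v) x = (\<Sum>i<p. c i * ip n (v i) x)"
  using ip_lc_right[of n x p c v] by (simp add: ip_sym)

lemma orthon_lc_ip:
  assumes "orthon n p v" "j < p"
  shows "ip n (v j) (lc p c v) = c j"
proof -
  have "ip n (v j) (lc p c v) = (\<Sum>i<p. c i * (if j = i then 1 else 0))"
    unfolding ip_lc_right using assms unfolding orthon_def by (intro sum.cong) auto
  also have "\<dots> = c j" using assms(2) by (simp add: if_distrib cong: if_cong)
  finally show ?thesis .
qed

lemma orthon_lc_lc:
  assumes "orthon n p v"
  shows "ip n (lc p c v) (lc p d v) = (\<Sum>i<p. c i * d i)"
  unfolding ip_lc_left using orthon_lc_ip[OF assms] by (simp add: ip_sym)

lemma bessel:
  assumes "orthon n p v"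
  shows "(\<Sum>i<p. (ip n (v i) x)\<^sup>2) \<le> ip n x x"
proof -
  define c where "c i = ip n (v i) x" for i
  have 0: "0 \<le> ip n (\<lambda>t. x t - lc p c v t) (\<lambda>t. x t - lc p c v t)" by (rule ip_nonneg)
  have "ip n (\<lambda>t. x t - lc p c v t) (\<lambda>t. x t - lc p c v t)
     = ip n x x - 2 * (\<Sum>i<p. c i * c i) + (\<Sum>i<p. c i * c i)"
    unfolding ip_diff_left ip_diff_right
    using orthon_lc_lc[OF assms, of c c] ip_lc_right[of n x p c v] ip_lc_left[of n p c v x]
    by (simp add: c_def ip_sym)
  with 0 show ?thesis by (simp add: c_def power2_eq_square)
qed

lemma ip_cauchy: "(ip n x y)\<^sup>2 \<le> ip n x x * ip n y y"
proof (cases "ip n y y = 0")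
  case True
  then have "\<forall>t<n. y t = 0" by (simp add: ip_zero_iff)
  then have "ip n x y = 0" unfolding ip_def by simp
  then show ?thesis by (simp add: ip_nonneg)
next
  case False
  then have yp: "ip n y y > 0" using ip_nonneg[of n y] by simp
  define a where "a = ip n x y / ip n y y"
  have "0 \<le> ip n (\<lambda>t. x t - a * y t) (\<lambda>t. x t - a * y t)" by (rule ip_nonneg)
  also have "\<dots> = ip n x x - 2 * a * ip n x y + a * a * ip n y y"
    unfolding ip_diff_left ip_diff_right ip_scale_left ip_scale_right by (simp add: ip_sym algebra_simps)
  also have "\<dots> = ip n x x - (ip n x y)\<^sup>2 / ip n y y"
    using yp unfolding a_def by (simp add: field_simps power2_eq_square)
  finally have "(ip n x y)\<^sup>2 / ip n y y \<le> ip n x x" by simp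
  then show ?thesis using yp by (simp add: divide_le_eq mult.commute)
qed

lemma dep_exists:
  "finite J \<Longrightarrow> card J > n \<Longrightarrow>
   \<exists>c. (\<exists>j\<in>J. c j \<noteq> 0) \<and> (\<forall>t<n. (\<Sum>j\<in>J. c j * f j t) = (0::real))"
proof (induction n arbitrary: J f)
  case 0
  then have "J \<noteq> {}" by auto
  then obtain j where "j \<in> J" by blast
  then show ?case by (intro exI[of _ "\<lambda>_. 1"]) auto
next
  case (Suc n)
  show ?case
  proof (cases "\<forall>j\<in>J. f j n = 0")
    case True
    from Suc.IH[OF Suc.prems(1), of f] Suc.prems(2) obtain c where
      c: "\<exists>j\<in>J. c j \<noteq> 0" "\<forall>t<n. (\<Sum>j\<in>J. c j * f j t) = 0" by auto
    have "\<forall>t<Suc n. (\<Sum>j\<in>J. c j * f j t) = 0"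
    proof (intro allI impI)
      fix t assume "t < Suc n"
      then consider "t < n" | "t = n" by linarith
      then show "(\<Sum>j\<in>J. c j * f j t) = 0"
        by cases (use c True in auto)
    qed
    then show ?thesis using c by blast
  next
    case False
    then obtain j0 where j0: "j0 \<in> J" "f j0 n \<noteq> 0" by auto
    define J' where "J' = J - {j0}"
    define g where "g j t = f j t - (f j n / f j0 n) * f j0 t" for j t
    have fJ': "finite J'" using Suc.prems(1) unfolding J'_def by auto
    have cJ': "card J' > n" using Suc.prems j0 unfolding J'_def by (simp add: card_Diff_singleton)
    from Suc.IH[OF fJ' cJ', of g] obtain c' where
      c': "\<exists>j\<in>J'. c' j \<noteq> 0" "\<forall>t<n. (\<Sum>j\<in>J'. c' j * g j t) = 0" by auto
    have c'n: "\<forall>t<Suc n. (\<Sum>j\<in>J'. c' j * g j t) = 0"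
    proof (intro allI impI)
      fix t assume "t < Suc n"
      then consider "t < n" | "t = n" by linarith
      then show "(\<Sum>j\<in>J'. c' j * g j t) = 0"
      proof cases
        case 1 then show ?thesis using c' by auto
      next
        case 2 then show ?thesis using j0(2) unfolding g_def by simp
      qed
    qed
    define c where "c j = (if j = j0 then - (\<Sum>i\<in>J'. c' i * f i n) / f j0 n else c' j)" for j
    have JJ: "J = insert j0 J'" "j0 \<notin> J'" using j0 unfolding J'_def by auto
    have "\<forall>t<Suc n. (\<Sum>j\<in>J. c j * f j t) = 0"
    proof (intro allI impI)
      fix t assume t: "t < Suc n"
      have "(\<Sum>j\<in>J. c j * f j t) = c j0 * f j0 t + (\<Sum>j\<in>J'. c' j * f j t)"
        unfolding JJ(1) using fJ' JJ(2) by (simp add: c_def) (intro sum.cong, auto)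
      also have "(\<Sum>j\<in>J'. c' j * f j t) = (\<Sum>j\<in>J'. c' j * g j t) + (\<Sum>j\<in>J'. c' j * f j n) / f j0 n * f j0 t"
        unfolding g_def by (simp add: algebra_simps sum.distrib sum_subtractf sum_distrib_left sum_distrib_right sum_divide_distrib)
      finally show "(\<Sum>j\<in>J. c j * f j t) = 0" using c'n t by (simp add: c_def)
    qed
    moreover have "\<exists>j\<in>J. c j \<noteq> 0" using c' JJ unfolding c_def by auto
    ultimately show ?thesis by blast
  qed
qed

lemma orthon_le:
  assumes "orthon n p v" shows "p \<le> n"
proof (rule ccontr)
  assume "\<not> p \<le> n"
  then have "card {..<p} > n" by simp
  from dep_exists[OF _ this, of v] obtain c where c: "\<exists>j<p. c j \<noteq> 0" "\<forall>t<n. (\<Sum>j<p. c j * v j t) = 0"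
    by auto
  then obtain j where j: "j < p" "c j \<noteq> 0" by auto
  have "c j = ip n (v j) (lc p c v)" using orthon_lc_ip[OF assms j(1)] by simp
  also have "\<dots> = 0" unfolding ip_def lc_def using c(2) by simp
  finally show False using j by simp
qed

lemma complement_exists:
  assumes "k < n"
  shows "\<exists>y. (\<exists>t<n. y t \<noteq> 0) \<and> (\<forall>i<k. ip n (w i) y = 0)"
proof -
  have "card {..<n} > k" using assms by simp
  from dep_exists[OF _ this, of "\<lambda>t i. w i t"] obtain c where
    c: "\<exists>j<n. c j \<noteq> 0" "\<forall>i<k. (\<Sum>j<n. c j * w i j) = 0" by auto
  show ?thesis
    by (rule exI[of _ c]) (use c in \<open>auto simp: ip_def mult.commute\<close>)
qed

definition nrmz :: "nat \<Rightarrow> (nat \<Rightarrow> real) \<Rightarrow> nat \<Rightarrow> real" where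
  "nrmz n y = (\<lambda>t. y t / sqrt (ip n y y))"

lemma nrmz_ip:
  assumes "\<exists>t<n. y t \<noteq> 0"
  shows "ip n (nrmz n y) (nrmz n y) = 1"
proof -
  have "ip n y y \<noteq> 0" using assms ip_zero_iff by auto
  then have p: "ip n y y > 0" using ip_nonneg[of n y] by simp
  have "ip n (nrmz n y) (nrmz n y) = ip n y y / (sqrt (ip n y y))^2"
    unfolding nrmz_def ip_def by (simp add: sum_divide_distrib power2_eq_square)
  then show ?thesis using p by simp
qed

lemma nrmz_ip_other: "ip n x (nrmz n y) = ip n x y / sqrt (ip n y y)"
  unfolding nrmz_def ip_def by (simp add: sum_divide_distrib)

lemma orthon_extend:
  assumes "orthon n p v" "\<exists>t<n. y t \<noteq> 0" "\<forall>i<p. ip n (v i) y = 0"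
  shows "orthon n (Suc p) (v(p := nrmz n y))"
  using assms nrmz_ip[OF assms(2)] unfolding orthon_def
  by (auto simp: nrmz_ip_other ip_sym less_Suc_eq)

lemma orthon_mono: "orthon n p v \<Longrightarrow> q \<le> p \<Longrightarrow> orthon n q v"
  unfolding orthon_def by auto

lemma complete_expand:
  assumes "orthon n n v" "t < n"
  shows "x t = lc n (\<lambda>i. ip n (v i) x) v t"
proof (rule ccontr)
  assume ne: "x t \<noteq> lc n (\<lambda>i. ip n (v i) x) v t"
  define y where "y s = x s - lc n (\<lambda>i. ip n (v i) x) v s" for s
  have y0: "\<exists>t<n. y t \<noteq> 0" using ne assms(2) unfolding y_def by auto
  have "\<forall>i<n. ip n (v i) y = 0"
  proof (intro allI impI)
    fix i assume "i < n"
    have "ip n (v i) y = ip n (v i) x - ip n (v i) (lc n (\<lambda>i. ip n (v i) x) v)"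
      unfolding y_def by (rule ip_diff_right)
    then show "ip n (v i) y = 0" using orthon_lc_ip[OF assms(1) \<open>i < n\<close>] by simp
  qed
  from orthon_le[OF orthon_extend[OF assms(1) y0 this]] show False by simp
qed

lemma complete_delta:
  assumes "orthon n n v" "a < n" "b < n"
  shows "(\<Sum>i<n. v i a * v i b) = (if a = b then 1 else 0)"
proof -
  define e where "e s = (if s = b then 1 else (0::real))" for s
  have "e a = lc n (\<lambda>i. ip n (v i) e) v a" by (rule complete_expand[OF assms(1,2)])
  moreover have "ip n (v i) e = v i b" for i unfolding ip_def e_def using assms(3)
    by (simp add: if_distrib cong: if_cong)
  ultimately show ?thesis unfolding lc_def e_def by (simp add: mult.commute split: if_splits)
qed

definition inspan :: "nat \<Rightarrow> nat \<Rightarrow> (nat \<Rightarrow> nat \<Rightarrow> real) \<Rightarrow> (nat \<Rightarrow> real) \<Rightarrow> bool" where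
  "inspan n N f x \<longleftrightarrow> (\<exists>c. \<forall>t<n. x t = (\<Sum>j<N. c j * f j t))"

lemma inspan_base: "j < N \<Longrightarrow> inspan n N f (f j)"
  unfolding inspan_def
proof (rule exI[of _ "\<lambda>i. if i = j then 1 else 0"], intro allI impI)
  fix t assume "j < N" "t < n"
  have "(\<Sum>i<N. (if i = j then 1 else 0) * f i t) = (\<Sum>i<N. if i = j then f i t else 0)"
    by (intro sum.cong) auto
  also have "\<dots> = f j t" using \<open>j < N\<close> by (simp add: sum.delta')
  finally show "f j t = (\<Sum>i<N. (if i = j then 1 else 0) * f i t)" by simp
qed

lemma inspan_Suc: "inspan n N f x \<Longrightarrow> inspan n (Suc N) f x"
  unfolding inspan_def
proof (elim exE)
  fix c assume c: "\<forall>t<n. x t = (\<Sum>j<N. c j * f j t)"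
  show "\<exists>c. \<forall>t<n. x t = (\<Sum>j<Suc N. c j * f j t)"
    by (rule exI[of _ "\<lambda>j. if j < N then c j else 0"]) (use c in auto)
qed

lemma inspan_diff: "inspan n N f x \<Longrightarrow> inspan n N f y \<Longrightarrow> inspan n N f (\<lambda>t. x t - y t)"
  unfolding inspan_def
proof (elim exE)
  fix c d assume c: "\<forall>t<n. x t = (\<Sum>j<N. c j * f j t)" and d: "\<forall>t<n. y t = (\<Sum>j<N. d j * f j t)"
  show "\<exists>c. \<forall>t<n. x t - y t = (\<Sum>j<N. c j * f j t)"
    by (rule exI[of _ "\<lambda>j. c j - d j"]) (use c d in \<open>auto simp: left_diff_distrib sum_subtractf\<close>)
qed

lemma inspan_scale: "inspan n N f x \<Longrightarrow> inspan n N f (\<lambda>t. a * x t)"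
  unfolding inspan_def
proof (elim exE)
  fix c assume c: "\<forall>t<n. x t = (\<Sum>j<N. c j * f j t)"
  show "\<exists>c. \<forall>t<n. a * x t = (\<Sum>j<N. c j * f j t)"
    by (rule exI[of _ "\<lambda>j. a * c j"]) (use c in \<open>auto simp: sum_distrib_left ac_simps\<close>)
qed

lemma inspan_sum: "(\<And>i. i < m \<Longrightarrow> inspan n N f (g i)) \<Longrightarrow> inspan n N f (lc m c g)"
proof (induction m)
  case 0
  then show ?case unfolding inspan_def lc_def by (intro exI[of _ "\<lambda>_. 0"]) simp
next
  case (Suc m)
  have a: "inspan n N f (lc m c g)" using Suc by auto
  have b: "inspan n N f (\<lambda>t. - c m * g m t)" using inspan_scale[OF Suc.prems[of m], of "- c m"] by simp
  have "inspan n N f (\<lambda>t. lc m c g t - (- c m * g m t))" by (rule inspan_diff[OF a b])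
  then show ?case unfolding lc_def by simp
qed

lemma inspan_perp:
  assumes "inspan n N f x" "\<And>j. j < N \<Longrightarrow> ip n w (f j) = 0"
  shows "ip n w x = 0"
proof -
  obtain c where c: "\<forall>t<n. x t = (\<Sum>j<N. c j * f j t)" using assms(1) unfolding inspan_def by auto
  have "ip n w x = ip n w (lc N c f)" by (rule ip_cong) (auto simp: c lc_def)
  also have "\<dots> = 0" unfolding ip_lc_right using assms(2) by simp
  finally show ?thesis .
qed

lemma lc_extend:
  "lc (Suc m) c (g(m := h)) = (\<lambda>t. lc m c g t + c m * h t)"
  unfolding lc_def by (auto intro!: sum.cong)

lemma gram_schmidt:
  "\<exists>m g. m \<le> N \<and> orthon n m g \<and>
      (\<forall>j<N. \<forall>t<n. f j t = lc m (\<lambda>a. ip n (g a) (f j)) g t) \<and>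
      (\<forall>a<m. inspan n N f (g a))"
proof (induction N)
  case 0
  show ?case by (rule exI[of _ 0]) (auto simp: orthon_def)
next
  case (Suc N)
  then obtain m g where mg: "m \<le> N" "orthon n m g"
    "\<forall>j<N. \<forall>t<n. f j t = lc m (\<lambda>a. ip n (g a) (f j)) g t" "\<forall>a<m. inspan n N f (g a)" by blast
  define r where "r t = f N t - lc m (\<lambda>a. ip n (g a) (f N)) g t" for t
  have rperp: "\<forall>i<m. ip n (g i) r = 0"
    unfolding r_def ip_diff_right using orthon_lc_ip[OF mg(2)] by simp
  have rspan: "inspan n (Suc N) f r"
    unfolding r_def
    by (intro inspan_diff inspan_base inspan_sum inspan_Suc) (use mg(4) in auto)
  show ?case
  proof (cases "\<exists>t<n. r t \<noteq> 0")
    case False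
    show ?thesis
    proof (intro exI conjI)
      show "m \<le> Suc N" using mg by simp
      show "orthon n m g" by fact
      show "\<forall>a<m. inspan n (Suc N) f (g a)" using mg(4) inspan_Suc by auto
      show "\<forall>j<Suc N. \<forall>t<n. f j t = lc m (\<lambda>a. ip n (g a) (f j)) g t"
        using mg(3) False unfolding r_def by (auto simp: less_Suc_eq)
    qed
  next
    case True
    define g' where "g' = g(m := nrmz n r)"
    have o': "orthon n (Suc m) g'" unfolding g'_def by (rule orthon_extend[OF mg(2) True rperp])
    have rpos: "ip n r r > 0" using True ip_zero_iff ip_nonneg[of n r] by (metis order_le_less)
    have gm: "g' m = nrmz n r" "\<And>a. a < m \<Longrightarrow> g' a = g a" unfolding g'_def by auto
    have perp: "\<And>i. i < m \<Longrightarrow> ip n (g' m) (g i) = 0"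
    proof -
      fix i assume i: "i < m"
      have "ip n (g' m) (g' i) = 0" using o' i unfolding orthon_def by auto
      then show "ip n (g' m) (g i) = 0" using gm(2)[OF i] by simp
    qed
    show ?thesis
    proof (intro exI conjI)
      show "Suc m \<le> Suc N" using mg by simp
      show "orthon n (Suc m) g'" by fact
      show "\<forall>a<Suc m. inspan n (Suc N) f (g' a)"
      proof (intro allI impI)
        fix a assume "a < Suc m"
        then consider "a < m" | "a = m" by linarith
        then show "inspan n (Suc N) f (g' a)"
        proof cases
          case 1 then show ?thesis using mg(4) gm inspan_Suc by auto
        next
          case 2
          have "inspan n (Suc N) f (\<lambda>t. (1 / sqrt (ip n r r)) * r t)" by (rule inspan_scale[OF rspan])
          then show ?thesis using 2 gm unfolding nrmz_def by simp
        qed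
      qed
      show "\<forall>j<Suc N. \<forall>t<n. f j t = lc (Suc m) (\<lambda>a. ip n (g' a) (f j)) g' t"
      proof (intro allI impI)
        fix j t assume j: "j < Suc N" and t: "t < n"
        have lcg: "lc m (\<lambda>a. ip n (g' a) (f j)) g' t = lc m (\<lambda>a. ip n (g a) (f j)) g t"
          unfolding lc_def using gm by simp
        have lcS: "lc (Suc m) (\<lambda>a. ip n (g' a) (f j)) g' t
              = lc m (\<lambda>a. ip n (g a) (f j)) g t + ip n (g' m) (f j) * g' m t"
          unfolding lc_def using gm by simp
        consider "j < N" | "j = N" using j by linarith
        then show "f j t = lc (Suc m) (\<lambda>a. ip n (g' a) (f j)) g' t"
        proof cases
          case 1
          have "ip n (g' m) (f j) = ip n (g' m) (lc m (\<lambda>a. ip n (g a) (f j)) g)"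
            by (rule ip_cong) (use mg(3) 1 in auto)
          also have "\<dots> = 0" unfolding ip_lc_right using perp by simp
          finally show ?thesis using mg(3) 1 t
            lcS by simp
        next
          case 2
          have "ip n (g' m) (f N) = ip n (g' m) (\<lambda>t. r t + lc m (\<lambda>a. ip n (g a) (f N)) g t)"
            by (rule ip_cong) (auto simp: r_def)
          also have "\<dots> = ip n (g' m) r"
            unfolding ip_add_right ip_lc_right using perp by simp
          also have "\<dots> = ip n r r / sqrt (ip n r r)"
            unfolding gm by (subst ip_sym) (rule nrmz_ip_other)
          also have "\<dots> = sqrt (ip n r r)" using rpos by (simp add: real_div_sqrt)
          finally have "ip n (g' m) (f N) * g' m t = r t" using rpos unfolding gm nrmz_def by simp
          then show ?thesis using 2 lcS unfolding r_def by simp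
        qed
      qed
    qed
  qed
qed

definition mv :: "real mat \<Rightarrow> (nat \<Rightarrow> real) \<Rightarrow> nat \<Rightarrow> real" where
  "mv A x = (\<lambda>i. \<Sum>j<dim_col A. A $$ (i, j) * x j)"

definition symm :: "nat \<Rightarrow> real mat \<Rightarrow> bool" where
  "symm n S \<longleftrightarrow> S \<in> carrier_mat n n \<and> (\<forall>i<n. \<forall>j<n. S $$ (i, j) = S $$ (j, i))"

lemma real_eigen:
  assumes S: "symm m T" and m: "0 < m"
  shows "\<exists>lam z. (\<exists>t<m. z t \<noteq> 0) \<and> (\<forall>t<m. mv T z t = lam * z t)"
proof -
  have T: "T \<in> carrier_mat m m" using S unfolding symm_def by auto
  define Tc where "Tc = map_mat complex_of_real T"
  have Tc: "Tc \<in> carrier_mat m m" using T unfolding Tc_def by auto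
  have "degree (char_poly Tc) = m" using degree_monic_char_poly[OF Tc] by auto
  then have "\<not> constant (poly (char_poly Tc))" using m constant_degree[of "char_poly Tc"] by simp
  from fundamental_theorem_of_algebra[OF this] obtain c where "poly (char_poly Tc) c = 0" by auto
  then have "eigenvalue Tc c" using eigenvalue_root_char_poly[OF Tc] by auto
  then obtain v where ev: "eigenvector Tc v c" unfolding eigenvalue_def by auto
  then have v: "v \<in> carrier_vec m" "v \<noteq> 0\<^sub>v m" "Tc *\<^sub>v v = c \<cdot>\<^sub>v v"
    unfolding eigenvector_def using Tc by auto
  have Tv: "(\<Sum>j<m. of_real (T $$ (i, j)) * v $ j) = c * v $ i" if "i < m" for i
  proof -
    have "(Tc *\<^sub>v v) $ i = c * v $ i" using v(3) that v(1) by simp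
    moreover have "(Tc *\<^sub>v v) $ i = (\<Sum>j<m. of_real (T $$ (i, j)) * v $ j)"
      using that Tc T v(1) unfolding Tc_def
      by (auto simp: mult_mat_vec_def scalar_prod_def row_def atLeast0LessThan intro!: sum.cong)
    ultimately show ?thesis by simp
  qed
  define q where "q = (\<Sum>i<m. \<Sum>j<m. cnj (v $ i) * of_real (T $$ (i, j)) * v $ j)"
  define s where "s = (\<Sum>i<m. cnj (v $ i) * v $ i)"
  have qs: "q = c * s"
  proof -
    have "q = (\<Sum>i<m. cnj (v $ i) * (\<Sum>j<m. of_real (T $$ (i, j)) * v $ j))"
      unfolding q_def by (simp add: sum_distrib_left mult.assoc)
    also have "\<dots> = (\<Sum>i<m. cnj (v $ i) * (c * v $ i))" using Tv by simp
    finally show ?thesis unfolding s_def by (simp add: sum_distrib_left ac_simps)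
  qed
  have "cnj q = (\<Sum>i<m. \<Sum>j<m. v $ i * of_real (T $$ (i, j)) * cnj (v $ j))"
    unfolding q_def by simp
  also have "\<dots> = (\<Sum>j<m. \<Sum>i<m. v $ i * of_real (T $$ (i, j)) * cnj (v $ j))"
    by (rule sum.swap)
  also have "\<dots> = q" unfolding q_def
    using S unfolding symm_def by (intro sum.cong refl) (auto simp: ac_simps)
  finally have "Im (cnj q) = Im q" by simp
  then have qr: "Im q = 0" by simp
  have sr: "s = of_real (\<Sum>i<m. (Re (v $ i))\<^sup>2 + (Im (v $ i))\<^sup>2)"
    unfolding s_def by (simp add: complex_eq_iff Re_sum Im_sum power2_eq_square)
  obtain i0 where i0: "i0 < m" "v $ i0 \<noteq> 0" using v(1,2)
    by (metis carrier_vecD eq_vecI index_zero_vec(1) index_zero_vec(2))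
  have "(\<Sum>i<m. (Re (v $ i))\<^sup>2 + (Im (v $ i))\<^sup>2) > 0"
  proof -
    have "(\<Sum>i<m. (Re (v $ i))\<^sup>2 + (Im (v $ i))\<^sup>2) \<ge> (Re (v $ i0))\<^sup>2 + (Im (v $ i0))\<^sup>2"
      using i0 by (intro member_le_sum) auto
    moreover have "(Re (v $ i0))\<^sup>2 + (Im (v $ i0))\<^sup>2 > 0" using i0
      by (metis complex_eq_iff zero_complex.simps sum_power2_gt_zero_iff)
    ultimately show ?thesis by linarith
  qed
  then have "Im c = 0" using qs qr sr by simp
  define lam where "lam = Re c"
  have c: "c = of_real lam" using \<open>Im c = 0\<close> unfolding lam_def by (simp add: complex_eq_iff)
  have Re_eq: "(\<Sum>j<m. T $$ (i, j) * Re (v $ j)) = lam * Re (v $ i)" if "i < m" for i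
    using arg_cong[OF Tv[OF that], of Re] unfolding c by (simp add: Re_sum)
  have Im_eq: "(\<Sum>j<m. T $$ (i, j) * Im (v $ j)) = lam * Im (v $ i)" if "i < m" for i
    using arg_cong[OF Tv[OF that], of Im] unfolding c by (simp add: Im_sum)
  have dc: "dim_col T = m" using T by auto
  show ?thesis
  proof (cases "Re (v $ i0) = 0")
    case False
    show ?thesis
      by (rule exI[of _ lam], rule exI[of _ "\<lambda>t. Re (v $ t)"]) (use False i0 Re_eq in \<open>auto simp: mv_def dc\<close>)
  next
    case True
    then have "Im (v $ i0) \<noteq> 0" using i0 by (simp add: complex_eq_iff)
    then show ?thesis
      by (intro exI[of _ lam] exI[of _ "\<lambda>t. Im (v $ t)"]) (use i0 Im_eq in \<open>auto simp: mv_def dc\<close>)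
  qed
qed

lemma mv_lc: "mv A (lc p c v) = lc p c (\<lambda>i. mv A (v i))"
  unfolding mv_def lc_def by (rule ext) (simp add: sum_distrib_left sum.swap[of _ "{..<p}"] ac_simps)

lemma mv_scale: "mv A (\<lambda>t. a * x t) = (\<lambda>t. a * mv A x t)"
  unfolding mv_def by (rule ext) (simp add: sum_distrib_left ac_simps)

lemma mv_cong: "dim_col A = n \<Longrightarrow> (\<And>t. t < n \<Longrightarrow> x t = y t) \<Longrightarrow> mv A x = mv A y"
  unfolding mv_def by auto

lemma symm_ip:
  assumes "symm n S"
  shows "ip n x (mv S y) = ip n (mv S x) y"
proof -
  have dc: "dim_col S = n" using assms unfolding symm_def by auto
  have "ip n x (mv S y) = (\<Sum>i<n. \<Sum>j<n. x i * S $$ (i, j) * y j)"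
    unfolding ip_def mv_def dc by (simp add: sum_distrib_left ac_simps)
  also have "\<dots> = (\<Sum>j<n. \<Sum>i<n. x i * S $$ (i, j) * y j)" by (rule sum.swap)
  also have "\<dots> = (\<Sum>j<n. y j * (\<Sum>i<n. S $$ (j, i) * x i))"
    using assms by (auto simp: symm_def sum_distrib_left ac_simps intro!: sum.cong)
  also have "\<dots> = ip n (mv S x) y" unfolding ip_def mv_def dc by (simp add: mult.commute)
  finally show ?thesis .
qed

lemma inspan_lc:
  assumes o: "orthon n m g" and f: "\<forall>j<N. \<forall>t<n. f j t = lc m (\<lambda>a. ip n (g a) (f j)) g t"
    and x: "inspan n N f x"
  shows "\<forall>t<n. x t = lc m (\<lambda>a. ip n (g a) x) g t"
proof -
  obtain c where c: "\<forall>t<n. x t = (\<Sum>j<N. c j * f j t)" using x unfolding inspan_def by auto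
  define d where "d a = (\<Sum>j<N. c j * ip n (g a) (f j))" for a
  have xd: "\<forall>t<n. x t = lc m d g t"
  proof (intro allI impI)
    fix t assume t: "t < n"
    have "x t = (\<Sum>j<N. c j * lc m (\<lambda>a. ip n (g a) (f j)) g t)" using c f t by simp
    also have "\<dots> = lc m d g t"
      unfolding lc_def d_def by (simp add: sum_distrib_left sum_distrib_right sum.swap[of _ "{..<N}"] ac_simps)
    finally show "x t = lc m d g t" .
  qed
  have "ip n (g a) x = d a" if "a < m" for a
  proof -
    have "ip n (g a) x = ip n (g a) (lc m d g)" by (rule ip_cong) (use xd in auto)
    then show ?thesis using orthon_lc_ip[OF o that] by simp
  qed
  then have "lc m (\<lambda>a. ip n (g a) x) g = lc m d g" unfolding lc_def by (intro ext sum.cong) auto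
  then show ?thesis using xd by simp
qed

lemma spectral_step:
  assumes S: "symm n S" and k: "k < n" and o: "orthon n k w"
    and ev: "\<forall>i<k. \<forall>t<n. mv S (w i) t = mu i * w i t"
  shows "\<exists>y lam. (\<exists>t<n. y t \<noteq> 0) \<and> (\<forall>i<k. ip n (w i) y = 0) \<and> (\<forall>t<n. mv S y t = lam * y t)"
proof -
  have dc: "dim_col S = n" using S unfolding symm_def by auto
  define inW where "inW x \<longleftrightarrow> (\<forall>i<k. ip n (w i) x = 0)" for x
  have invar: "inW (mv S x)" if "inW x" for x
    unfolding inW_def
  proof (intro allI impI)
    fix i assume i: "i < k"
    have "ip n (w i) (mv S x) = ip n (mv S (w i)) x" by (rule symm_ip[OF S])
    also have "\<dots> = ip n (\<lambda>t. mu i * w i t) x" by (rule ip_cong) (use ev i in auto)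
    also have "\<dots> = 0" using that i unfolding inW_def ip_scale_left by simp
    finally show "ip n (w i) (mv S x) = 0" .
  qed
  define e where "e (t::nat) (s::nat) = (if s = t then 1 else (0::real))" for t s
  have ipe: "ip n x (e t) = x t" if "t < n" for x t
    unfolding ip_def e_def using that by (simp add: if_distrib[of "\<lambda>z. _ * z"] sum.delta' cong: if_cong)
  define f where "f t s = e t s - lc k (\<lambda>i. ip n (w i) (e t)) w s" for t s
  have fW: "inW (f t)" for t
    unfolding inW_def f_def
  proof (intro allI impI)
    fix i assume "i < k"
    show "ip n (w i) (\<lambda>s. e t s - lc k (\<lambda>i. ip n (w i) (e t)) w s) = 0"
      unfolding ip_diff_right using orthon_lc_ip[OF o \<open>i < k\<close>] by simp
  qed
  obtain m g where g: "m \<le> n" "orthon n m g"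
      "\<forall>j<n. \<forall>t<n. f j t = lc m (\<lambda>a. ip n (g a) (f j)) g t" "\<forall>a<m. inspan n n f (g a)"
    using gram_schmidt[of n n f] by blast
  have gW: "inW (g a)" if "a < m" for a
    unfolding inW_def using inspan_perp[OF g(4)[rule_format, OF that]] fW unfolding inW_def by auto
  have Wspan: "\<forall>t<n. x t = lc m (\<lambda>a. ip n (g a) x) g t" if "inW x" for x
  proof -
    have "inspan n n f x" unfolding inspan_def
    proof (rule exI[of _ x], intro allI impI)
      fix s assume s: "s < n"
      have "(\<Sum>t<n. x t * f t s) = (\<Sum>t<n. x t * e t s) - lc k (\<lambda>i. \<Sum>t<n. x t * ip n (w i) (e t)) w s"
        unfolding f_def lc_def by (simp add: right_diff_distrib sum_subtractf sum_distrib_left sum_distrib_right sum.swap[of _ "{..<n}"] ac_simps)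
      also have "(\<Sum>t<n. x t * e t s) = x s" unfolding e_def using s
        by (simp add: if_distrib[of "\<lambda>z. _ * z"] sum.delta cong: if_cong)
      also have "(\<lambda>i. \<Sum>t<n. x t * ip n (w i) (e t)) = (\<lambda>i. ip n (w i) x)"
      proof (rule ext)
        fix i
        have "(\<Sum>t<n. x t * ip n (w i) (e t)) = (\<Sum>t<n. w i t * x t)"
          using ipe by (intro sum.cong) (auto simp: mult.commute)
        then show "(\<Sum>t<n. x t * ip n (w i) (e t)) = ip n (w i) x" by (simp add: ip_def)
      qed
      also have "lc k (\<lambda>i. ip n (w i) x) w s = 0" using that unfolding inW_def lc_def by simp
      finally show "x s = (\<Sum>t<n. x t * f t s)" by simp
    qed
    from inspan_lc[OF g(2) g(3) this] show ?thesis .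
  qed
  obtain y0 where y0: "\<exists>t<n. y0 t \<noteq> 0" "\<forall>i<k. ip n (w i) y0 = 0"
    using complement_exists[OF k] by blast
  have m0: "m > 0"
  proof (rule ccontr)
    assume "\<not> m > 0"
    then have "m = 0" by simp
    with Wspan[of y0] y0 show False unfolding inW_def lc_def by auto
  qed
  define T where "T = mat m m (\<lambda>(a, b). ip n (g a) (mv S (g b)))"
  have T: "symm m T" unfolding symm_def T_def using symm_ip[OF S] by (auto simp: ip_sym)
  obtain lam z where z: "\<exists>t<m. z t \<noteq> 0" "\<forall>t<m. mv T z t = lam * z t"
    using real_eigen[OF T m0] by blast
  define y where "y = lc m z g"
  have yW: "inW y" unfolding inW_def y_def ip_lc_right using gW unfolding inW_def by simp
  have yy: "ip n y y = (\<Sum>i<m. z i * z i)" unfolding y_def by (rule orthon_lc_lc[OF g(2)])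
  have ynz: "\<exists>t<n. y t \<noteq> 0"
  proof (rule ccontr)
    assume "\<not> (\<exists>t<n. y t \<noteq> 0)"
    then have "ip n y y = 0" using ip_zero_iff by auto
    then have "(\<Sum>i<m. z i * z i) = 0" using yy by simp
    then have "\<forall>i<m. z i = 0" by (subst (asm) sum_nonneg_eq_0_iff) auto
    then show False using z(1) by auto
  qed
  have "\<forall>t<n. mv S y t = lam * y t"
  proof (intro allI impI)
    fix t assume t: "t < n"
    have Sg: "mv S (g b) t = lc m (\<lambda>a. T $$ (a, b)) g t" if "b < m" for b
      using Wspan[OF invar[OF gW[OF that]], rule_format, OF t] that unfolding lc_def T_def by simp
    have mvy: "mv S y = lc m z (\<lambda>i. mv S (g i))" unfolding y_def by (rule mv_lc)
    have "mv S y t = (\<Sum>b<m. z b * mv S (g b) t)" unfolding mvy lc_def by (rule refl)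
    also have "\<dots> = (\<Sum>b<m. z b * (\<Sum>a<m. T $$ (a, b) * g a t))" using Sg unfolding lc_def by simp
    also have "\<dots> = (\<Sum>b<m. \<Sum>a<m. T $$ (a, b) * z b * g a t)"
      by (simp add: sum_distrib_left ac_simps)
    also have "\<dots> = (\<Sum>a<m. \<Sum>b<m. T $$ (a, b) * z b * g a t)"
      by (rule sum.swap)
    also have "\<dots> = (\<Sum>a<m. (\<Sum>b<m. T $$ (a, b) * z b) * g a t)"
      by (simp add: sum_distrib_right)
    also have "\<dots> = (\<Sum>a<m. (lam * z a) * g a t)"
      using z(2) unfolding mv_def T_def by (intro sum.cong) auto
    also have "\<dots> = lam * y t" unfolding y_def lc_def by (simp add: sum_distrib_left ac_simps)
    finally show "mv S y t = lam * y t" .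
  qed
  then show ?thesis using ynz yW unfolding inW_def by blast
qed

theorem spectral:
  assumes S: "symm n S"
  shows "\<exists>w mu. orthon n n w \<and> (\<forall>i<n. \<forall>t<n. mv S (w i) t = mu i * w i t)"
proof -
  have "k \<le> n \<Longrightarrow> \<exists>w mu. orthon n k w \<and> (\<forall>i<k. \<forall>t<n. mv S (w i) t = mu i * w i t)" for k
  proof (induction k)
    case 0
    then show ?case by (auto simp: orthon_def)
  next
    case (Suc k)
    then obtain w mu where wm: "orthon n k w" "\<forall>i<k. \<forall>t<n. mv S (w i) t = mu i * w i t" by auto
    from spectral_step[OF S _ wm] Suc.prems obtain y lam where
      y: "\<exists>t<n. y t \<noteq> 0" "\<forall>i<k. ip n (w i) y = 0" "\<forall>t<n. mv S y t = lam * y t" by auto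
    have dc: "dim_col S = n" using S unfolding symm_def by auto
    have "mv S (nrmz n y) = (\<lambda>t. mv S y t / sqrt (ip n y y))"
      unfolding nrmz_def mv_def by (simp add: sum_divide_distrib)
    then have "\<forall>t<n. mv S (nrmz n y) t = lam * nrmz n y t"
      using y(3) unfolding nrmz_def by simp
    show ?case
    proof (intro exI conjI)
      show "orthon n (Suc k) (w(k := nrmz n y))" by (rule orthon_extend[OF wm(1) y(1,2)])
      show "\<forall>i<Suc k. \<forall>t<n. mv S ((w(k := nrmz n y)) i) t = (mu(k := lam)) i * (w(k := nrmz n y)) i t"
        using wm(2) \<open>\<forall>t<n. mv S (nrmz n y) t = lam * nrmz n y t\<close> by (auto simp: less_Suc_eq)
    qed
  qed
  then show ?thesis by simp
qed

lemma mult_entry: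
  assumes "A \<in> carrier_mat m k" "B \<in> carrier_mat k n" "i < m" "j < n"
  shows "(A * B) $$ (i, j) = (\<Sum>l<k. A $$ (i, l) * B $$ (l, j))"
  using assms by (auto simp: scalar_prod_def atLeast0LessThan intro!: sum.cong)

lemma mv_add_scale: "mv A (\<lambda>t. x t + s * y t) = (\<lambda>t. mv A x t + s * mv A y t)"
  unfolding mv_def by (rule ext) (simp add: distrib_left sum.distrib sum_distrib_left ac_simps)

lemma mv_mult:
  assumes "B \<in> carrier_mat n n" "C \<in> carrier_mat n n" "t < n"
  shows "mv (B * C) x t = mv B (mv C x) t"
proof -
  have "mv (B * C) x t = (\<Sum>j<n. (\<Sum>l<n. B $$ (t, l) * C $$ (l, j)) * x j)"
    unfolding mv_def using assms by (auto simp: scalar_prod_def atLeast0LessThan intro!: sum.cong)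
  also have "\<dots> = (\<Sum>j<n. \<Sum>l<n. B $$ (t, l) * C $$ (l, j) * x j)" by (simp add: sum_distrib_right)
  also have "\<dots> = (\<Sum>l<n. \<Sum>j<n. B $$ (t, l) * C $$ (l, j) * x j)" by (rule sum.swap)
  also have "\<dots> = mv B (mv C x) t" unfolding mv_def using assms by (simp add: sum_distrib_left ac_simps)
  finally show ?thesis .
qed

definition psdm :: "nat \<Rightarrow> real mat \<Rightarrow> bool" where
  "psdm n B \<longleftrightarrow> symm n B \<and> (\<forall>x. 0 \<le> ip n x (mv B x))"

lemma psd_iff:
  assumes "B \<in> carrier_mat n n"
  shows "psd B \<longleftrightarrow> psdm n B"
proof
  assume p: "psd B"
  have s: "symm n B" unfolding symm_def using assms p unfolding psd_def
    by (auto, metis carrier_matD index_transpose_mat(1))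
  have "0 \<le> ip n x (mv B x)" for x
  proof -
    have "0 \<le> vec n x \<bullet> (B *\<^sub>v vec n x)" using p assms unfolding psd_def by auto
    also have "vec n x \<bullet> (B *\<^sub>v vec n x) = ip n x (mv B x)"
      using assms unfolding ip_def mv_def by (simp add: scalar_prod_def atLeast0LessThan)
    finally show ?thesis .
  qed
  then show "psdm n B" using s unfolding psdm_def by auto
next
  assume p: "psdm n B"
  have "B = transpose_mat B" using p assms unfolding psdm_def symm_def by (intro eq_matI) auto
  moreover have "0 \<le> v \<bullet> (B *\<^sub>v v)" if "v \<in> carrier_vec n" for v
  proof -
    have "v \<bullet> (B *\<^sub>v v) = ip n (\<lambda>i. v $ i) (mv B (\<lambda>i. v $ i))"
      using assms that unfolding ip_def mv_def by (simp add: scalar_prod_def atLeast0LessThan)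
    then show ?thesis using p unfolding psdm_def by simp
  qed
  ultimately show "psd B" unfolding psd_def using assms by auto
qed

lemma psd_zero:
  assumes p: "psdm n B" and v: "ip n v (mv B v) = 0"
  shows "\<forall>t<n. mv B v t = 0"
proof -
  have S: "symm n B" using p unfolding psdm_def by auto
  define u where "u = mv B v"
  define a where "a = ip n u u"
  define b where "b = ip n u (mv B u)"
  have b0: "b \<ge> 0" using p unfolding psdm_def b_def by auto
  have key: "0 \<le> 2 * s * a + s * s * b" for s
  proof -
    have "0 \<le> ip n (\<lambda>t. v t + s * u t) (mv B (\<lambda>t. v t + s * u t))" using p unfolding psdm_def by auto
    also have "\<dots> = ip n v (mv B v) + s * ip n v (mv B u) + s * ip n u (mv B v) + s * s * ip n u (mv B u)"
      unfolding mv_add_scale ip_add_left ip_add_right ip_scale_left ip_scale_right by (simp add: algebra_simps)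
    also have "ip n v (mv B u) = a" unfolding a_def u_def by (simp add: symm_ip[OF S])
    also have "ip n u (mv B v) = a" unfolding a_def u_def ..
    finally show ?thesis using v unfolding b_def by (simp add: algebra_simps)
  qed
  have "a = 0"
  proof -
    define s where "s = - a / (b + 1)"
    have "0 \<le> 2 * s * a + s * s * b" by (rule key)
    then have "0 \<le> (2 * s * a + s * s * b) * (b + 1)^2" using b0 by simp
    also have "(2 * s * a + s * s * b) * (b + 1)^2 = - a * a * (b + 2)"
    proof -
      have sb: "s * (b + 1) = - a" unfolding s_def using b0 by simp
      have "(2 * s * a + s * s * b) * (b + 1)^2 = 2 * a * (b + 1) * (s * (b + 1)) + b * (s * (b + 1)) * (s * (b + 1))"
        by (simp add: algebra_simps power2_eq_square)
      also have "\<dots> = - a * a * (b + 2)" unfolding sb by (simp add: algebra_simps)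
      finally show ?thesis .
    qed
    finally have "a * a * (b + 2) \<le> 0" by simp
    then have "a * a \<le> 0" using b0 by (simp add: mult_le_0_iff)
    then show ?thesis by (metis mult_le_0_iff not_square_less_zero order_antisym_conv zero_le_square mult_eq_0_iff)
  qed
  then show ?thesis unfolding a_def u_def using ip_zero_iff by auto
qed

lemma symm_zero:
  assumes S: "symm n D" and w: "orthon n n w" and ev: "\<forall>i<n. \<forall>t<n. mv D (w i) t = 0"
  shows "\<forall>a<n. \<forall>b<n. D $$ (a, b) = 0"
proof (intro allI impI)
  fix a b assume ab: "a < n" "b < n"
  have dc: "dim_col D = n" using S unfolding symm_def by auto
  define e where "e (s::nat) = (if s = b then 1 else (0::real))" for s
  have "D $$ (a, b) = mv D e a" unfolding mv_def dc e_def using ab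
    by (simp add: if_distrib[of "\<lambda>z. _ * z"] sum.delta' cong: if_cong)
  also have "mv D e = mv D (lc n (\<lambda>i. ip n (w i) e) w)"
    by (rule mv_cong[OF dc]) (rule complete_expand[OF w])
  also have "mv D (lc n (\<lambda>i. ip n (w i) e) w) = lc n (\<lambda>i. ip n (w i) e) (\<lambda>i. mv D (w i))"
    by (rule mv_lc)
  also have "\<dots> a = 0" unfolding lc_def using ev ab by simp
  finally show "D $$ (a, b) = 0" .
qed

lemma psd_unique:
  assumes B: "B \<in> carrier_mat n n" and C: "C \<in> carrier_mat n n"
    and pB: "psdm n B" and pC: "psdm n C" and BC: "B * B = C * C"
  shows "B = C"
proof -
  define D where "D = mat n n (\<lambda>(i, j). B $$ (i, j) - C $$ (i, j))"
  have SB: "symm n B" and SC: "symm n C" using pB pC unfolding psdm_def by auto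
  have SD: "symm n D" unfolding symm_def D_def using SB SC unfolding symm_def by auto
  have mvD: "mv D x t = mv B x t - mv C x t" if "t < n" for x t
    unfolding mv_def D_def using B C that by (simp add: left_diff_distrib sum_subtractf)
  obtain w mu where w: "orthon n n w" "\<forall>i<n. \<forall>t<n. mv D (w i) t = mu i * w i t"
    using spectral[OF SD] by blast
  have BB: "ip n v (mv B (mv B v)) = ip n v (mv C (mv C v))" for v
  proof -
    have "ip n v (mv B (mv B v)) = ip n v (mv (B * B) v)" by (rule ip_cong) (use mv_mult[OF B B] in auto)
    also have "\<dots> = ip n v (mv (C * C) v)" using BC by simp
    also have "\<dots> = ip n v (mv C (mv C v))" by (rule ip_cong) (use mv_mult[OF C C] in auto)
    finally show ?thesis .
  qed
  have mu0: "mu i = 0" if i: "i < n" for i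
  proof (rule ccontr)
    assume nz: "mu i \<noteq> 0"
    define v where "v = w i"
    have Bv: "\<forall>t<n. mv B v t = mv C v t + mu i * v t"
    proof (intro allI impI)
      fix t assume t: "t < n"
      have "mv D v t = mu i * v t" using w(2) i t unfolding v_def by auto
      moreover have "mv D v t = mv B v t - mv C v t" by (rule mvD[OF t])
      ultimately show "mv B v t = mv C v t + mu i * v t" by simp
    qed
    have e1: "ip n (mv B v) (mv B v) = ip n (mv C v) (mv B v) + mu i * ip n v (mv B v)"
    proof -
      have "ip n (mv B v) (mv B v) = ip n (\<lambda>t. mv C v t + mu i * v t) (mv B v)" by (rule ip_cong) (use Bv in auto)
      then show ?thesis unfolding ip_add_left ip_scale_left .
    qed
    have e2: "ip n (mv C v) (mv C v) = ip n (mv C v) (mv B v) - mu i * ip n v (mv C v)"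
    proof -
      have "ip n (mv C v) (mv C v) = ip n (mv C v) (\<lambda>t. mv B v t - mu i * v t)" by (rule ip_cong) (use Bv in auto)
      then show ?thesis unfolding ip_diff_right ip_scale_right by (simp add: ip_sym)
    qed
    have "ip n (mv B v) (mv B v) = ip n (mv C v) (mv C v)"
      using BB[of v] symm_ip[OF SB, of v "mv B v"] symm_ip[OF SC, of v "mv C v"] by simp
    with e1 e2 have "mu i * (ip n v (mv B v) + ip n v (mv C v)) = 0" by (simp add: algebra_simps)
    with nz have "ip n v (mv B v) + ip n v (mv C v) = 0" by simp
    moreover have "ip n v (mv B v) \<ge> 0" "ip n v (mv C v) \<ge> 0" using pB pC unfolding psdm_def by auto
    ultimately have "ip n v (mv B v) = 0" "ip n v (mv C v) = 0" by linarith+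
    then have "\<forall>t<n. mv B v t = 0" "\<forall>t<n. mv C v t = 0" using psd_zero pB pC by blast+
    then have "\<forall>t<n. mu i * v t = 0" using Bv by auto
    then have "\<forall>t<n. v t = 0" using nz by simp
    then have "ip n v v = 0" using ip_zero_iff by auto
    moreover have "ip n v v = 1" using w(1) i unfolding orthon_def v_def by auto
    ultimately show False by simp
  qed
  have "\<forall>a<n. \<forall>b<n. D $$ (a, b) = 0" by (rule symm_zero[OF SD w(1)]) (use w(2) mu0 in auto)
  then show ?thesis using B C unfolding D_def by (intro eq_matI) auto
qed

definition fip :: "real mat \<Rightarrow> real mat \<Rightarrow> real" where
  "fip A B = (\<Sum>i<dim_row A. \<Sum>j<dim_col A. A $$ (i, j) * B $$ (i, j))"

lemma expand_entry:
  assumes v: "orthon n n v" and dc: "dim_col A = n" and b: "b < n"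
  shows "A $$ (a, b) = (\<Sum>i<n. mv A (v i) a * v i b)"
proof -
  define e where "e (s::nat) = (if s = b then 1 else (0::real))" for s
  have "A $$ (a, b) = mv A e a" unfolding mv_def dc e_def using b
    by (simp add: if_distrib[of "\<lambda>z. _ * z"] sum.delta' cong: if_cong)
  also have "mv A e = mv A (lc n (\<lambda>i. ip n (v i) e) v)"
    by (rule mv_cong[OF dc]) (rule complete_expand[OF v])
  also have "\<dots> = lc n (\<lambda>i. ip n (v i) e) (\<lambda>i. mv A (v i))" by (rule mv_lc)
  also have "(\<lambda>i. ip n (v i) e) = (\<lambda>i. v i b)" unfolding ip_def e_def using b
    by (auto simp: if_distrib[of "\<lambda>z. _ * z"] sum.delta' cong: if_cong)
  finally show ?thesis unfolding lc_def by (simp add: mult.commute)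
qed

lemma fip_expand:
  assumes v: "orthon n n v" and A: "A \<in> carrier_mat m n" and C: "C \<in> carrier_mat m n"
  shows "fip A C = (\<Sum>i<n. ip m (mv A (v i)) (mv C (v i)))"
proof -
  have "fip A C = (\<Sum>a<m. \<Sum>b<n. (\<Sum>i<n. mv A (v i) a * v i b) * C $$ (a, b))"
    unfolding fip_def using A expand_entry[OF v] by (intro sum.cong refl) auto
  also have "\<dots> = (\<Sum>a<m. \<Sum>b<n. \<Sum>i<n. mv A (v i) a * (C $$ (a, b) * v i b))"
    by (simp add: sum_distrib_left sum_distrib_right ac_simps)
  also have "\<dots> = (\<Sum>a<m. \<Sum>i<n. \<Sum>b<n. mv A (v i) a * (C $$ (a, b) * v i b))"
    by (rule sum.cong[OF refl], rule sum.swap)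
  also have "\<dots> = (\<Sum>a<m. \<Sum>i<n. mv A (v i) a * mv C (v i) a)"
    using C unfolding mv_def by (simp add: sum_distrib_left)
  also have "\<dots> = (\<Sum>i<n. \<Sum>a<m. mv A (v i) a * mv C (v i) a)" by (rule sum.swap)
  finally show ?thesis unfolding ip_def .
qed

lemma MtM_entry:
  assumes A: "A \<in> carrier_mat m n" and "i < n" "j < n"
  shows "(transpose_mat A * A) $$ (i, j) = (\<Sum>l<m. A $$ (l, i) * A $$ (l, j))"
  using assms by (auto simp: scalar_prod_def atLeast0LessThan intro!: sum.cong)

lemma AtA_ip:
  assumes A: "A \<in> carrier_mat m n"
  shows "ip n x (mv (transpose_mat A * A) y) = ip m (mv A x) (mv A y)"
proof -
  have At: "transpose_mat A \<in> carrier_mat n m" using A by simp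
  have "ip n x (mv (transpose_mat A * A) y) = (\<Sum>i<n. x i * (\<Sum>j<n. (\<Sum>l<m. A $$ (l, i) * A $$ (l, j)) * y j))"
    unfolding ip_def mv_def using A by (intro sum.cong refl) (simp del: index_mult_mat(1) add: MtM_entry[OF A])
  also have "\<dots> = (\<Sum>i<n. \<Sum>j<n. \<Sum>l<m. x i * A $$ (l, i) * (A $$ (l, j) * y j))"
    by (simp add: sum_distrib_left sum_distrib_right ac_simps)
  also have "\<dots> = (\<Sum>i<n. \<Sum>l<m. \<Sum>j<n. x i * A $$ (l, i) * (A $$ (l, j) * y j))"
    by (rule sum.cong[OF refl], rule sum.swap)
  also have "\<dots> = (\<Sum>l<m. \<Sum>i<n. \<Sum>j<n. x i * A $$ (l, i) * (A $$ (l, j) * y j))"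
    by (rule sum.swap)
  also have "\<dots> = ip m (mv A x) (mv A y)"
    unfolding ip_def mv_def using A by (simp add: sum_product ac_simps)
  finally show ?thesis .
qed

lemma svd:
  assumes A: "A \<in> carrier_mat m n"
  shows "\<exists>v mu. orthon n n v \<and> (\<forall>i<n. 0 \<le> mu i) \<and>
     (\<forall>i<n. \<forall>j<n. ip m (mv A (v i)) (mv A (v j)) = (if i = j then mu i else 0)) \<and>
     trace_norm A = (\<Sum>i<n. sqrt (mu i))"
proof -
  define M where "M = transpose_mat A * A"
  have Mc: "M \<in> carrier_mat n n" using A unfolding M_def by simp
  have SM: "symm n M" unfolding symm_def using Mc A unfolding M_def
    by (auto simp del: index_mult_mat(1) simp add: MtM_entry[OF A] mult.commute)
  obtain v mu where v: "orthon n n v" "\<forall>i<n. \<forall>t<n. mv M (v i) t = mu i * v i t"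
    using spectral[OF SM] by blast
  have ipA: "ip m (mv A (v i)) (mv A (v j)) = (if i = j then mu i else 0)" if "i < n" "j < n" for i j
  proof -
    have "ip m (mv A (v i)) (mv A (v j)) = ip n (v i) (mv M (v j))" unfolding M_def by (simp add: AtA_ip[OF A])
    also have "\<dots> = ip n (v i) (\<lambda>t. mu j * v j t)" by (rule ip_cong) (use v(2) that in auto)
    also have "\<dots> = mu j * (if i = j then 1 else 0)" unfolding ip_scale_right using v(1) that unfolding orthon_def by auto
    finally show ?thesis by simp
  qed
  have mu0: "0 \<le> mu i" if "i < n" for i using ipA[OF that that] ip_nonneg by metis
  define B where "B = mat n n (\<lambda>(a, b). \<Sum>i<n. sqrt (mu i) * v i a * v i b)"
  have Bc: "B \<in> carrier_mat n n" unfolding B_def by simp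
  have SB: "symm n B" unfolding symm_def B_def by (auto simp: ac_simps)
  have mvB: "\<forall>a<n. mv B x a = lc n (\<lambda>i. sqrt (mu i) * ip n (v i) x) v a" for x
  proof (intro allI impI)
    fix a assume a: "a < n"
    have "mv B x a = (\<Sum>b<n. (\<Sum>i<n. sqrt (mu i) * v i a * v i b) * x b)"
      unfolding mv_def using Bc a by (simp add: B_def)
    also have "\<dots> = (\<Sum>b<n. \<Sum>i<n. sqrt (mu i) * v i a * (v i b * x b))"
      by (simp add: sum_distrib_left sum_distrib_right ac_simps)
    also have "\<dots> = (\<Sum>i<n. \<Sum>b<n. sqrt (mu i) * v i a * (v i b * x b))" by (rule sum.swap)
    also have "\<dots> = lc n (\<lambda>i. sqrt (mu i) * ip n (v i) x) v a"
      unfolding lc_def ip_def by (simp add: sum_distrib_left ac_simps)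
    finally show "mv B x a = lc n (\<lambda>i. sqrt (mu i) * ip n (v i) x) v a" .
  qed
  have pB: "psdm n B" unfolding psdm_def
  proof (intro conjI allI SB)
    fix x
    have "ip n x (mv B x) = ip n x (lc n (\<lambda>i. sqrt (mu i) * ip n (v i) x) v)"
      by (rule ip_cong) (use mvB in auto)
    also have "\<dots> = (\<Sum>i<n. sqrt (mu i) * (ip n (v i) x * ip n (v i) x))"
      unfolding ip_lc_right by (simp add: ip_sym ac_simps)
    also have "\<dots> \<ge> 0" using mu0 by (intro sum_nonneg) auto
    finally show "0 \<le> ip n x (mv B x)" .
  qed
  have Bcol: "\<forall>c<n. B $$ (c, b) = lc n (\<lambda>j. sqrt (mu j) * v j b) v c" if "b < n" for b
    unfolding B_def lc_def using that by (auto simp: ac_simps)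
  have BB: "B * B = M"
  proof (rule eq_matI)
    fix a b assume ab: "a < dim_row M" "b < dim_col M"
    then have a: "a < n" and b: "b < n" using Mc by auto
    have "(B * B) $$ (a, b) = (\<Sum>c<n. B $$ (a, c) * B $$ (c, b))"
      by (rule mult_entry[OF Bc Bc a b])
    also have "\<dots> = mv B (\<lambda>c. B $$ (c, b)) a" unfolding mv_def using Bc by simp
    also have "\<dots> = lc n (\<lambda>i. sqrt (mu i) * ip n (v i) (\<lambda>c. B $$ (c, b))) v a" using mvB a by simp
    also have "\<dots> = lc n (\<lambda>i. sqrt (mu i) * (sqrt (mu i) * v i b)) v a"
    proof -
      have "ip n (v i) (\<lambda>c. B $$ (c, b)) = sqrt (mu i) * v i b" if "i < n" for i
      proof -
        have "ip n (v i) (\<lambda>c. B $$ (c, b)) = ip n (v i) (lc n (\<lambda>j. sqrt (mu j) * v j b) v)"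
          by (rule ip_cong) (use Bcol[OF b] in auto)
        then show ?thesis using orthon_lc_ip[OF v(1) that] by simp
      qed
      then show ?thesis unfolding lc_def by simp
    qed
    also have "\<dots> = (\<Sum>i<n. mu i * v i a * v i b)" unfolding lc_def using mu0
      by (intro sum.cong refl) (simp add: ac_simps)
    also have "\<dots> = M $$ (a, b)"
    proof -
      have dcM: "dim_col M = n" using Mc by auto
      have "M $$ (a, b) = (\<Sum>i<n. mv M (v i) a * v i b)" by (rule expand_entry[OF v(1) dcM b])
      also have "\<dots> = (\<Sum>i<n. mu i * v i a * v i b)" using v(2) a by simp
      finally show ?thesis by simp
    qed
    finally show "(B * B) $$ (a, b) = M $$ (a, b)" .
  qed (use Bc Mc in auto)
  have THE: "(THE B. B \<in> carrier_mat (dim_col A) (dim_col A) \<and> psd B \<and> B * B = transpose_mat A * A) = B"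
  proof (rule the_equality)
    show "B \<in> carrier_mat (dim_col A) (dim_col A) \<and> psd B \<and> B * B = transpose_mat A * A"
      using Bc pB BB A psd_iff[OF Bc] unfolding M_def by auto
    fix B' assume B': "B' \<in> carrier_mat (dim_col A) (dim_col A) \<and> psd B' \<and> B' * B' = transpose_mat A * A"
    then have B'c: "B' \<in> carrier_mat n n" using A by auto
    show "B' = B" by (rule psd_unique[OF B'c Bc]) (use B' psd_iff[OF B'c] pB BB B'c in \<open>auto simp: M_def\<close>)
  qed
  have "trace_norm A = mtrace B" unfolding trace_norm_def THE ..
  also have "\<dots> = (\<Sum>a<n. \<Sum>i<n. sqrt (mu i) * (v i a * v i a))" unfolding mtrace_def B_def by (simp add: ac_simps)
  also have "\<dots> = (\<Sum>i<n. sqrt (mu i) * ip n (v i) (v i))" unfolding ip_def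
    by (subst sum.swap) (simp add: sum_distrib_left)
  also have "\<dots> = (\<Sum>i<n. sqrt (mu i))" using v(1) unfolding orthon_def by simp
  finally show ?thesis using v(1) mu0 ipA by blast
qed

lemma tn_upper:
  assumes A: "A \<in> carrier_mat m n" and C: "C \<in> carrier_mat m n" and s: "0 \<le> s"
    and Cb: "\<forall>x. ip m (mv C x) (mv C x) \<le> s\<^sup>2 * ip n x x"
  shows "fip A C \<le> trace_norm A * s"
proof -
  obtain v mu where v: "orthon n n v" "\<forall>i<n. 0 \<le> mu i"
     "\<forall>i<n. \<forall>j<n. ip m (mv A (v i)) (mv A (v j)) = (if i = j then mu i else 0)"
     "trace_norm A = (\<Sum>i<n. sqrt (mu i))"
    using svd[OF A] by blast
  have trm: "ip m (mv A (v i)) (mv C (v i)) \<le> sqrt (mu i) * s" if i: "i < n" for i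
  proof -
    have "(ip m (mv A (v i)) (mv C (v i)))\<^sup>2 \<le> ip m (mv A (v i)) (mv A (v i)) * ip m (mv C (v i)) (mv C (v i))"
      by (rule ip_cauchy)
    also have "\<dots> \<le> mu i * (s\<^sup>2 * 1)"
    proof -
      have "ip m (mv C (v i)) (mv C (v i)) \<le> s\<^sup>2 * ip n (v i) (v i)" using Cb by auto
      also have "ip n (v i) (v i) = 1" using v(1) i unfolding orthon_def by auto
      finally show ?thesis using v(2,3) i by (simp add: mult_left_mono)
    qed
    finally have "(ip m (mv A (v i)) (mv C (v i)))\<^sup>2 \<le> (sqrt (mu i) * s)\<^sup>2"
      using v(2) i s by (simp add: power_mult_distrib)
    then show ?thesis by (rule power2_le_imp_le) (use v(2) i s in auto)
  qed
  have "fip A C = (\<Sum>i<n. ip m (mv A (v i)) (mv C (v i)))" by (rule fip_expand[OF v(1) A C])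
  also have "\<dots> \<le> (\<Sum>i<n. sqrt (mu i) * s)" by (intro sum_mono trm) auto
  also have "\<dots> = trace_norm A * s" using v(4) by (simp add: sum_distrib_right)
  finally show ?thesis .
qed

lemma tn_nonneg:
  assumes A: "A \<in> carrier_mat m n"
  shows "0 \<le> trace_norm A"
proof -
  obtain v mu where v: "\<forall>i<n. 0 \<le> mu i" "trace_norm A = (\<Sum>i<n. sqrt (mu i))"
    using svd[OF A] by blast
  then show ?thesis by (auto intro: sum_nonneg)
qed

lemma orthog_lc_lc:
  assumes "\<forall>j<p. \<forall>k<p. ip n (u j) (u k) = (if j = k then d j else 0)"
  shows "ip n (lc p c u) (lc p c u) = (\<Sum>j<p. c j * c j * d j)"
proof -
  have "ip n (lc p c u) (lc p c u) = (\<Sum>j<p. c j * (\<Sum>k<p. c k * ip n (u k) (u j)))"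
    unfolding ip_lc_left ip_lc_right ..
  also have "\<dots> = (\<Sum>j<p. c j * (c j * d j))"
  proof (intro sum.cong refl)
    fix j assume "j \<in> {..<p}"
    then have "(\<Sum>k<p. c k * ip n (u k) (u j)) = (\<Sum>k<p. if k = j then c j * d j else 0)"
      using assms by (intro sum.cong) auto
    also have "\<dots> = c j * d j" using \<open>j \<in> {..<p}\<close> by (simp add: sum.delta')
    finally show "c j * (\<Sum>k<p. c k * ip n (u k) (u j)) = c j * (c j * d j)" by simp
  qed
  finally show ?thesis by (simp add: ac_simps)
qed

lemma tn_attain:
  assumes A: "A \<in> carrier_mat m n"
  shows "\<exists>C \<in> carrier_mat m n. (\<forall>x. ip m (mv C x) (mv C x) \<le> ip n x x) \<and> fip A C = trace_norm A"
proof -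
  obtain v mu where v: "orthon n n v" "\<forall>i<n. 0 \<le> mu i"
     "\<forall>i<n. \<forall>j<n. ip m (mv A (v i)) (mv A (v j)) = (if i = j then mu i else 0)"
     "trace_norm A = (\<Sum>i<n. sqrt (mu i))"
    using svd[OF A] by blast
  define u where "u j = (if mu j > 0 then (\<lambda>a. mv A (v j) a / sqrt (mu j)) else (\<lambda>_. 0))" for j
  have uo: "\<forall>j<n. \<forall>k<n. ip m (u j) (u k) = (if j = k then (if mu j > 0 then 1 else 0) else 0)"
  proof (intro allI impI)
    fix j k assume jk: "j < n" "k < n"
    show "ip m (u j) (u k) = (if j = k then (if mu j > 0 then 1 else 0) else 0)"
    proof (cases "mu j > 0 \<and> mu k > 0")
      case True
      have "ip m (u j) (u k) = ip m (mv A (v j)) (mv A (v k)) / (sqrt (mu j) * sqrt (mu k))"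
        using True unfolding u_def ip_def by (simp add: sum_divide_distrib)
      also have "\<dots> = (if j = k then (if mu j > 0 then 1 else 0) else 0)"
        using v(3) jk True by (auto simp: real_sqrt_mult[symmetric])
      finally show ?thesis .
    next
      case False
      then have "ip m (u j) (u k) = 0" unfolding u_def ip_def by auto
      then show ?thesis using False by auto
    qed
  qed
  define C where "C = mat m n (\<lambda>(a, b). \<Sum>j<n. u j a * v j b)"
  have Cc: "C \<in> carrier_mat m n" unfolding C_def by simp
  have mvC: "\<forall>a<m. mv C x a = lc n (\<lambda>j. ip n (v j) x) u a" for x
  proof (intro allI impI)
    fix a assume a: "a < m"
    have "mv C x a = (\<Sum>b<n. (\<Sum>j<n. u j a * v j b) * x b)" unfolding mv_def using a by (simp add: C_def)
    also have "\<dots> = (\<Sum>b<n. \<Sum>j<n. u j a * (v j b * x b))" by (simp add: sum_distrib_left sum_distrib_right ac_simps)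
    also have "\<dots> = (\<Sum>j<n. \<Sum>b<n. u j a * (v j b * x b))" by (rule sum.swap)
    also have "\<dots> = lc n (\<lambda>j. ip n (v j) x) u a" unfolding lc_def ip_def by (simp add: sum_distrib_left ac_simps)
    finally show "mv C x a = lc n (\<lambda>j. ip n (v j) x) u a" .
  qed
  have Cb: "ip m (mv C x) (mv C x) \<le> ip n x x" for x
  proof -
    have "ip m (mv C x) (mv C x) = ip m (lc n (\<lambda>j. ip n (v j) x) u) (lc n (\<lambda>j. ip n (v j) x) u)"
      by (rule ip_cong) (use mvC in auto)
    also have "\<dots> = (\<Sum>j<n. ip n (v j) x * ip n (v j) x * (if mu j > 0 then 1 else 0))"
      by (rule orthog_lc_lc[OF uo])
    also have "\<dots> \<le> (\<Sum>j<n. (ip n (v j) x)\<^sup>2)" by (intro sum_mono) (auto simp: power2_eq_square)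
    also have "\<dots> \<le> ip n x x" by (rule bessel[OF v(1)])
    finally show ?thesis .
  qed
  have "fip A C = (\<Sum>i<n. ip m (mv A (v i)) (mv C (v i)))" by (rule fip_expand[OF v(1) A Cc])
  also have "\<dots> = (\<Sum>i<n. sqrt (mu i))"
  proof (intro sum.cong refl)
    fix i assume "i \<in> {..<n}"
    then have i: "i < n" by simp
    have "ip m (mv A (v i)) (mv C (v i)) = ip m (mv A (v i)) (lc n (\<lambda>j. ip n (v j) (v i)) u)"
      by (rule ip_cong) (use mvC in auto)
    also have "lc n (\<lambda>j. ip n (v j) (v i)) u = u i"
    proof (rule ext)
      fix a
      have "lc n (\<lambda>j. ip n (v j) (v i)) u a = (\<Sum>j<n. if j = i then u j a else 0)"
        unfolding lc_def using v(1) i unfolding orthon_def by (intro sum.cong) auto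
      then show "lc n (\<lambda>j. ip n (v j) (v i)) u a = u i a" using i by (simp add: sum.delta')
    qed
    also have "ip m (mv A (v i)) (u i) = sqrt (mu i)"
    proof (cases "mu i > 0")
      case True
      have "ip m (mv A (v i)) (u i) = ip m (mv A (v i)) (mv A (v i)) / sqrt (mu i)"
        using True unfolding u_def ip_def by (simp add: sum_divide_distrib)
      also have "\<dots> = mu i / sqrt (mu i)" using v(3) i by simp
      also have "\<dots> = sqrt (mu i)" using True by (simp add: real_div_sqrt)
      finally show ?thesis .
    next
      case False
      then have "mu i = 0" using v(2)[rule_format, OF i] by simp
      then show ?thesis unfolding u_def ip_def by simp
    qed
    finally show "ip m (mv A (v i)) (mv C (v i)) = sqrt (mu i)" .
  qed
  finally show ?thesis using Cc Cb v(4) by auto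
qed

lemma spec_bound:
  assumes A: "A \<in> carrier_mat m n"
  shows "0 \<le> spec_norm A \<and> (\<forall>x. ip m (mv A x) (mv A x) \<le> (spec_norm A)\<^sup>2 * ip n x x)"
proof -
  define F where "F = (\<Sum>i<m. \<Sum>j<n. (A $$ (i, j))\<^sup>2)"
  have dA: "dim_row A = m" "dim_col A = n" using A by auto
  have setq: "{sqrt (\<Sum>i<dim_row A. (\<Sum>j<dim_col A. A $$ (i, j) * x j)\<^sup>2) | x. (\<Sum>j<dim_col A. (x j)\<^sup>2) \<le> 1}
      = {sqrt (ip m (mv A x) (mv A x)) | x. ip n x x \<le> 1}"
    unfolding ip_def mv_def dA by (simp add: power2_eq_square)
  have Fb: "ip m (mv A x) (mv A x) \<le> F * ip n x x" for x
  proof -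
    have "ip m (mv A x) (mv A x) = (\<Sum>i<m. (ip n (\<lambda>j. A $$ (i, j)) x)\<^sup>2)"
      unfolding ip_def mv_def dA by (simp add: power2_eq_square)
    also have "\<dots> \<le> (\<Sum>i<m. ip n (\<lambda>j. A $$ (i, j)) (\<lambda>j. A $$ (i, j)) * ip n x x)"
      by (intro sum_mono ip_cauchy)
    also have "\<dots> = F * ip n x x" unfolding F_def ip_def by (simp add: sum_distrib_right power2_eq_square)
    finally show ?thesis .
  qed
  have F0: "0 \<le> F" unfolding F_def by (intro sum_nonneg) auto
  define S where "S = {sqrt (ip m (mv A x) (mv A x)) | x. ip n x x \<le> 1}"
  have sn: "spec_norm A = Sup S" unfolding spec_norm_def setq S_def ..
  have bdd: "bdd_above S" unfolding S_def
  proof (rule bdd_aboveI[of _ "sqrt F"])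
    fix y assume "y \<in> {sqrt (ip m (mv A x) (mv A x)) | x. ip n x x \<le> 1}"
    then obtain x where x: "y = sqrt (ip m (mv A x) (mv A x))" "ip n x x \<le> 1" by auto
    have "ip m (mv A x) (mv A x) \<le> F * ip n x x" by (rule Fb)
    also have "\<dots> \<le> F" using x(2) F0 by (simp add: mult_left_le)
    finally show "y \<le> sqrt F" using x(1) by simp
  qed
  have mem: "sqrt (ip m (mv A x) (mv A x)) \<le> Sup S" if "ip n x x \<le> 1" for x
    using bdd that unfolding S_def by (intro cSup_upper) auto
  have nn: "0 \<le> Sup S"
  proof -
    have "sqrt (ip m (mv A (\<lambda>_. 0)) (mv A (\<lambda>_. 0))) \<le> Sup S" by (rule mem) (simp add: ip_def)
    then show ?thesis by (simp add: mv_def ip_def)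
  qed
  have "ip m (mv A x) (mv A x) \<le> (Sup S)\<^sup>2 * ip n x x" for x
  proof (cases "ip n x x = 0")
    case True
    then show ?thesis using Fb[of x] ip_nonneg[of m "mv A x"] by simp
  next
    case False
    then have xp: "ip n x x > 0" using ip_nonneg[of n x] by simp
    define y where "y = nrmz n x"
    have "ip n y y = 1" unfolding y_def
      by (rule nrmz_ip) (use False ip_zero_iff in blast)
    then have "sqrt (ip m (mv A y) (mv A y)) \<le> Sup S" by (intro mem) simp
    moreover have "mv A y = (\<lambda>t. mv A x t / sqrt (ip n x x))"
      unfolding y_def nrmz_def mv_def by (simp add: sum_divide_distrib)
    ultimately have "sqrt (ip m (\<lambda>t. mv A x t / sqrt (ip n x x)) (\<lambda>t. mv A x t / sqrt (ip n x x))) \<le> Sup S"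
      by simp
    moreover have "ip m (\<lambda>t. mv A x t / sqrt (ip n x x)) (\<lambda>t. mv A x t / sqrt (ip n x x))
        = ip m (mv A x) (mv A x) / (sqrt (ip n x x) * sqrt (ip n x x))"
      unfolding ip_def by (simp add: sum_divide_distrib)
    moreover have "sqrt (ip n x x) * sqrt (ip n x x) = ip n x x" using xp by simp
    ultimately have q: "sqrt (ip m (mv A x) (mv A x) / ip n x x) \<le> Sup S" by simp
    have q0: "0 \<le> ip m (mv A x) (mv A x) / ip n x x"
      by (rule divide_nonneg_pos[OF ip_nonneg xp])
    have "ip m (mv A x) (mv A x) / ip n x x = (sqrt (ip m (mv A x) (mv A x) / ip n x x))\<^sup>2"
      using q0 by simp
    also have "\<dots> \<le> (Sup S)\<^sup>2" using q q0 by (intro power_mono) auto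
    finally show ?thesis using xp by (simp add: divide_le_eq)
  qed
  then show ?thesis using nn sn by simp
qed

lemma sum_set_nth: "distinct xs \<Longrightarrow> sum g (set xs) = (\<Sum>i<length xs. g (xs ! i))"
  by (simp add: sum.distinct_set_conv_list sum_list_sum_nth atLeast0LessThan)

lemma col_basis:
  assumes W: "W \<in> carrier_mat m n"
  shows "\<exists>N f. N \<le> mrank W \<and> (\<forall>b<n. inspan m N f (\<lambda>t. W $$ (t, b)))"
proof -
  interpret vec_space "TYPE(real)" m .
  obtain S where S: "maximal S (\<lambda>T. T \<subseteq> set (cols W) \<and> lin_indpt T)"
    using maximal_exists[of "(\<lambda>T. T \<subseteq> set (cols W) \<and> lin_indpt T)" "card (set (cols W))" "{}"]
    by (meson List.finite_set card_mono empty_iff empty_subsetI finite_lin_indpt2 rev_finite_subset)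
  have rk: "mrank W = card S" unfolding mrank_def using rank_card_indpt[OF _ S] W by auto
  have SW: "S \<subseteq> set (cols W)" "lin_indpt S" using S unfolding maximal_def by auto
  have Sc: "S \<subseteq> carrier_vec m" using SW(1) W cols_dim by blast
  have fS: "finite S" using SW(1) finite_subset by blast
  obtain ss where ss: "set ss = S" "distinct ss" using finite_distinct_list[OF fS] by blast
  have len: "length ss = card S" using ss distinct_card by fastforce
  define f where "f j t = ss ! j $ t" for j t
  have "inspan m (length ss) f (\<lambda>t. W $$ (t, b))" if b: "b < n" for b
  proof -
    have c: "col W b \<in> set (cols W)" using b W by (simp add: cols_def)
    have cc: "col W b \<in> carrier_vec m" by (rule col_carrier_vec[OF b W])
    have insp: "col W b \<in> span S"
    proof (cases "col W b \<in> S")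
      case True
      then show ?thesis using in_own_span[OF Sc] by auto
    next
      case False
      have "\<not> lin_indpt (S \<union> {col W b})"
      proof
        assume "lin_indpt (S \<union> {col W b})"
        then have "S \<union> {col W b} = S" using S c unfolding maximal_def by auto
        then show False using False by auto
      qed
      then show ?thesis using lin_dep_iff_in_span[OF Sc SW(2) cc False] by simp
    qed
    obtain a where a: "lincomb a S = col W b" using finite_in_span[OF fS Sc insp] by auto
    show ?thesis unfolding inspan_def
    proof (rule exI[of _ "\<lambda>j. a (ss ! j)"], intro allI impI)
      fix t assume t: "t < m"
      have "W $$ (t, b) = col W b $ t" using t b W by simp
      also have "\<dots> = (\<Sum>u\<in>S. a u * u $ t)" unfolding a[symmetric] by (rule lincomb_index[OF t Sc])
      also have "\<dots> = (\<Sum>j<length ss. a (ss ! j) * f j t)" unfolding ss(1)[symmetric] f_def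
        by (rule sum_set_nth[OF ss(2)])
      finally show "W $$ (t, b) = (\<Sum>j<length ss. a (ss ! j) * f j t)" .
    qed
  qed
  then show ?thesis using rk len by (intro exI[of _ "length ss"] exI[of _ f]) auto
qed

lemma mv_mult_rect:
  assumes "A \<in> carrier_mat a k" "B \<in> carrier_mat k c" "t < a"
  shows "mv (A * B) x t = mv A (mv B x) t"
proof -
  have "mv (A * B) x t = (\<Sum>j<c. (\<Sum>l<k. A $$ (t, l) * B $$ (l, j)) * x j)"
    unfolding mv_def using assms by (auto simp: scalar_prod_def atLeast0LessThan intro!: sum.cong)
  also have "\<dots> = (\<Sum>j<c. \<Sum>l<k. A $$ (t, l) * B $$ (l, j) * x j)" by (simp add: sum_distrib_right)
  also have "\<dots> = (\<Sum>l<k. \<Sum>j<c. A $$ (t, l) * B $$ (l, j) * x j)" by (rule sum.swap)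
  also have "\<dots> = mv A (mv B x) t" unfolding mv_def using assms by (simp add: sum_distrib_left ac_simps)
  finally show ?thesis .
qed

lemma mv_add_mat: "A \<in> carrier_mat a c \<Longrightarrow> B \<in> carrier_mat a c \<Longrightarrow> t < a \<Longrightarrow> mv (A + B) x t = mv A x t + mv B x t"
  unfolding mv_def by (simp add: distrib_right sum.distrib)

lemma mv_minus_mat: "A \<in> carrier_mat a c \<Longrightarrow> B \<in> carrier_mat a c \<Longrightarrow> t < a \<Longrightarrow> mv (A - B) x t = mv A x t - mv B x t"
  unfolding mv_def by (simp add: left_diff_distrib sum_subtractf)

lemma mv_one: "t < n \<Longrightarrow> mv (1\<^sub>m n) x t = x t"
  unfolding mv_def by (simp add: if_distrib[of "\<lambda>z. z * _"] sum.delta cong: if_cong)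

lemma fip_add_left: "X \<in> carrier_mat m n \<Longrightarrow> Y \<in> carrier_mat m n \<Longrightarrow> fip (X + Y) C = fip X C + fip Y C"
  unfolding fip_def by (simp add: distrib_right sum.distrib)

lemma fip_add_right: "X \<in> carrier_mat m n \<Longrightarrow> Y \<in> carrier_mat m n \<Longrightarrow> C \<in> carrier_mat m n \<Longrightarrow> fip C (X + Y) = fip C X + fip C Y"
  unfolding fip_def by (simp add: distrib_left sum.distrib)

lemma fip_zero: "fip (0\<^sub>m m n) C = 0"
  unfolding fip_def by simp

lemma fip_mult_right:
  assumes X: "X \<in> carrier_mat m k" and R: "R \<in> carrier_mat k n" and Y: "Y \<in> carrier_mat m n"
  shows "fip (X * R) Y = fip X (Y * transpose_mat R)"
proof -
  have RT: "transpose_mat R \<in> carrier_mat n k" using R by simp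
  have "fip (X * R) Y = (\<Sum>a<m. \<Sum>b<n. (\<Sum>d<k. X $$ (a, d) * R $$ (d, b)) * Y $$ (a, b))"
    unfolding fip_def using X R by (simp add: mult_entry[OF X R] del: index_mult_mat(1))
  also have "\<dots> = (\<Sum>a<m. \<Sum>b<n. \<Sum>d<k. X $$ (a, d) * (Y $$ (a, b) * R $$ (d, b)))"
    by (simp add: sum_distrib_left sum_distrib_right ac_simps)
  also have "\<dots> = (\<Sum>a<m. \<Sum>d<k. \<Sum>b<n. X $$ (a, d) * (Y $$ (a, b) * R $$ (d, b)))"
    by (rule sum.cong[OF refl], rule sum.swap)
  also have "\<dots> = fip X (Y * transpose_mat R)"
    unfolding fip_def using X R Y by (simp add: mult_entry[OF Y RT] sum_distrib_left del: index_mult_mat(1))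
  finally show ?thesis .
qed

lemma fip_mult_left:
  assumes L: "L \<in> carrier_mat m k" and X: "X \<in> carrier_mat k n" and Y: "Y \<in> carrier_mat m n"
  shows "fip (L * X) Y = fip X (transpose_mat L * Y)"
proof -
  have LT: "transpose_mat L \<in> carrier_mat k m" using L by simp
  have "fip (L * X) Y = (\<Sum>a<m. \<Sum>b<n. (\<Sum>c<k. L $$ (a, c) * X $$ (c, b)) * Y $$ (a, b))"
    unfolding fip_def using X L by (simp add: mult_entry[OF L X] del: index_mult_mat(1))
  also have "\<dots> = (\<Sum>a<m. \<Sum>b<n. \<Sum>c<k. X $$ (c, b) * (L $$ (a, c) * Y $$ (a, b)))"
    by (simp add: sum_distrib_left sum_distrib_right ac_simps)
  also have "\<dots> = (\<Sum>a<m. \<Sum>c<k. \<Sum>b<n. X $$ (c, b) * (L $$ (a, c) * Y $$ (a, b)))"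
    by (rule sum.cong[OF refl], rule sum.swap)
  also have "\<dots> = (\<Sum>c<k. \<Sum>a<m. \<Sum>b<n. X $$ (c, b) * (L $$ (a, c) * Y $$ (a, b)))"
    by (rule sum.swap)
  also have "\<dots> = (\<Sum>c<k. \<Sum>b<n. \<Sum>a<m. X $$ (c, b) * (L $$ (a, c) * Y $$ (a, b)))"
    by (rule sum.cong[OF refl], rule sum.swap)
  also have "\<dots> = fip X (transpose_mat L * Y)"
    unfolding fip_def using X L Y by (simp add: mult_entry[OF LT Y] sum_distrib_left del: index_mult_mat(1))
  finally show ?thesis .
qed

lemma symm_transpose: "symm n L \<Longrightarrow> transpose_mat L = L"
  unfolding symm_def by (intro eq_matI) auto

lemma fip_amgm:
  assumes t: "0 < t" and X: "X \<in> carrier_mat m n" and Y: "Y \<in> carrier_mat m n"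
  shows "\<bar>fip X Y\<bar> \<le> (t * fip X X + fip Y Y / t) / 2"
proof -
  have e: "\<bar>x * y\<bar> \<le> (t * (x * x) + y * y / t) / 2" for x y :: real
  proof -
    have "0 \<le> (t * \<bar>x\<bar> - \<bar>y\<bar>)\<^sup>2" by simp
    then have "2 * t * \<bar>x * y\<bar> \<le> t * t * (x * x) + y * y"
      by (simp add: power2_eq_square algebra_simps abs_mult)
    then show ?thesis using t by (simp add: field_simps)
  qed
  have "\<bar>fip X Y\<bar> \<le> (\<Sum>a<m. \<Sum>b<n. \<bar>X $$ (a, b) * Y $$ (a, b)\<bar>)"
    unfolding fip_def using X by (auto intro!: order.trans[OF sum_abs] sum_mono)
  also have "\<dots> \<le> (\<Sum>a<m. \<Sum>b<n. (t * (X $$ (a, b) * X $$ (a, b)) + Y $$ (a, b) * Y $$ (a, b) / t) / 2)"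
    by (intro sum_mono e)
  also have "\<dots> = (t * fip X X + fip Y Y / t) / 2"
    unfolding fip_def using X Y by (simp add: sum.distrib sum_distrib_left sum_divide_distrib add_divide_distrib)
  finally show ?thesis .
qed

definition projm :: "nat \<Rightarrow> nat \<Rightarrow> (nat \<Rightarrow> nat \<Rightarrow> real) \<Rightarrow> real mat" where
  "projm m p a = mat m m (\<lambda>(s, t). \<Sum>i<p. a i s * a i t)"

lemma projm_carrier: "projm m p a \<in> carrier_mat m m" unfolding projm_def by simp

lemma projm_symm: "symm m (projm m p a)" unfolding symm_def projm_def by (auto simp: ac_simps)

lemma projm_mv: "t < m \<Longrightarrow> mv (projm m p a) x t = lc p (\<lambda>i. ip m (a i) x) a t"
proof -
  assume t: "t < m"
  have "mv (projm m p a) x t = (\<Sum>s<m. (\<Sum>i<p. a i t * a i s) * x s)"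
    unfolding mv_def projm_def using t by simp
  also have "\<dots> = (\<Sum>s<m. \<Sum>i<p. a i t * (a i s * x s))" by (simp add: sum_distrib_left sum_distrib_right ac_simps)
  also have "\<dots> = (\<Sum>i<p. \<Sum>s<m. a i t * (a i s * x s))" by (rule sum.swap)
  also have "\<dots> = lc p (\<lambda>i. ip m (a i) x) a t" unfolding lc_def ip_def by (simp add: sum_distrib_left ac_simps)
  finally show ?thesis .
qed

lemma projm_norm:
  assumes "orthon m p a"
  shows "ip m (mv (projm m p a) x) (mv (projm m p a) x) = (\<Sum>i<p. (ip m (a i) x)\<^sup>2)"
proof -
  have "ip m (mv (projm m p a) x) (mv (projm m p a) x) = ip m (lc p (\<lambda>i. ip m (a i) x) a) (lc p (\<lambda>i. ip m (a i) x) a)"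
    by (rule ip_cong) (auto simp: projm_mv)
  also have "\<dots> = (\<Sum>i<p. (ip m (a i) x)\<^sup>2)" by (simp add: orthon_lc_lc[OF assms] power2_eq_square)
  finally show ?thesis .
qed

lemma projm_ip_perp:
  assumes "orthon m p a"
  shows "ip m (mv (projm m p a) u) (\<lambda>t. w t - mv (projm m p a) w t) = 0"
proof -
  let ?P = "projm m p a"
  have "ip m (mv ?P u) (\<lambda>t. w t - mv ?P w t) = ip m (lc p (\<lambda>i. ip m (a i) u) a) (\<lambda>t. w t - lc p (\<lambda>i. ip m (a i) w) a t)"
    by (rule ip_cong) (auto simp: projm_mv)
  also have "\<dots> = 0"
  proof -
    have "(\<Sum>i<p. ip m (a i) u * ip m (a i) (lc p (\<lambda>i. ip m (a i) w) a)) = (\<Sum>i<p. ip m (a i) u * ip m (a i) w)"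
      by (rule sum.cong) (simp_all add: orthon_lc_ip[OF assms])
    then show ?thesis unfolding ip_diff_right orthon_lc_lc[OF assms] ip_lc_left by simp
  qed
  finally show ?thesis .
qed

lemma projm_pyth:
  assumes "orthon m p a"
  shows "ip m x x = ip m (mv (projm m p a) x) (mv (projm m p a) x) +
     ip m (\<lambda>t. x t - mv (projm m p a) x t) (\<lambda>t. x t - mv (projm m p a) x t)"
proof -
  let ?P = "projm m p a"
  have "ip m x x = ip m (\<lambda>t. mv ?P x t + (x t - mv ?P x t)) (\<lambda>t. mv ?P x t + (x t - mv ?P x t))" by simp
  also have "\<dots> = ip m (mv ?P x) (mv ?P x) + 2 * ip m (mv ?P x) (\<lambda>t. x t - mv ?P x t) +
     ip m (\<lambda>t. x t - mv ?P x t) (\<lambda>t. x t - mv ?P x t)"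
    unfolding ip_add_left ip_add_right by (simp add: ip_sym)
  finally show ?thesis using projm_ip_perp[OF assms] by simp
qed

lemma projm_span:
  assumes "orthon m p a" "\<forall>t<m. x t = lc p c a t" "t < m"
  shows "mv (projm m p a) x t = x t"
proof -
  have "ip m (a i) x = c i" if "i < p" for i
  proof -
    have "ip m (a i) x = ip m (a i) (lc p c a)" by (rule ip_cong) (use assms in auto)
    then show ?thesis using orthon_lc_ip[OF assms(1) that] by simp
  qed
  then show ?thesis using assms projm_mv[OF assms(3)] unfolding lc_def by simp
qed

lemma tn_triangle:
  assumes X: "X \<in> carrier_mat m n" and Y: "Y \<in> carrier_mat m n"
  shows "trace_norm (X + Y) \<le> trace_norm X + trace_norm Y"
proof -
  have XY: "X + Y \<in> carrier_mat m n" using X Y by simp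
  obtain C where C: "C \<in> carrier_mat m n" "\<forall>x. ip m (mv C x) (mv C x) \<le> ip n x x"
    "fip (X + Y) C = trace_norm (X + Y)" using tn_attain[OF XY] by blast
  have Cb: "\<forall>x. ip m (mv C x) (mv C x) \<le> 1\<^sup>2 * ip n x x" using C(2) by simp
  have "trace_norm (X + Y) = fip X C + fip Y C" using C(3) fip_add_left[OF X Y] by simp
  also have "\<dots> \<le> trace_norm X * 1 + trace_norm Y * 1"
    by (intro add_mono tn_upper[OF X C(1) _ Cb] tn_upper[OF Y C(1) _ Cb]) auto
  finally show ?thesis by simp
qed

lemma adjoint_ip:
  assumes C: "C \<in> carrier_mat m n"
  shows "ip m y (mv C z) = ip n (mv (transpose_mat C) y) z"
proof -
  have "ip m y (mv C z) = (\<Sum>s<m. \<Sum>b<n. y s * C $$ (s, b) * z b)"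
    unfolding ip_def mv_def using C by (simp add: sum_distrib_left ac_simps)
  also have "\<dots> = (\<Sum>b<n. \<Sum>s<m. y s * C $$ (s, b) * z b)" by (rule sum.swap)
  also have "\<dots> = ip n (mv (transpose_mat C) y) z"
    unfolding ip_def mv_def using C by (simp add: sum_distrib_left sum_distrib_right ac_simps)
  finally show ?thesis .
qed

lemma transpose_bound:
  assumes C: "C \<in> carrier_mat m n" and Cb: "\<forall>x. ip m (mv C x) (mv C x) \<le> ip n x x"
  shows "ip n (mv (transpose_mat C) y) (mv (transpose_mat C) y) \<le> ip m y y"
proof -
  define z where "z = mv (transpose_mat C) y"
  have "ip n z z = ip m y (mv C z)" unfolding z_def by (simp add: adjoint_ip[OF C])
  then have "(ip n z z)\<^sup>2 \<le> ip m y y * ip m (mv C z) (mv C z)" using ip_cauchy[of m y "mv C z"] by simp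
  also have "\<dots> \<le> ip m y y * ip n z z" using Cb by (simp add: mult_left_mono ip_nonneg)
  finally have h: "ip n z z * ip n z z \<le> ip m y y * ip n z z" by (simp add: power2_eq_square)
  show ?thesis
  proof (cases "ip n z z = 0")
    case True then show ?thesis using ip_nonneg[of m y] z_def by simp
  next
    case False
    then have "ip n z z > 0" using ip_nonneg[of n z] by simp
    then show ?thesis using h z_def by simp
  qed
qed

lemma frob_right:
  assumes X: "X \<in> carrier_mat m n" and o: "orthon n q bq"
    and Xb: "\<forall>x. ip m (mv X x) (mv X x) \<le> ip n x x"
  shows "fip (X * projm n q bq) (X * projm n q bq) \<le> real q"
proof -
  let ?Q = "projm n q bq"
  have Q: "?Q \<in> carrier_mat n n" by (rule projm_carrier)
  have XQ: "X * ?Q \<in> carrier_mat m n" using X Q by simp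
  have ent: "(X * ?Q) $$ (a, b) = mv ?Q (\<lambda>s. X $$ (a, s)) b" if "a < m" "b < n" for a b
  proof -
    have "(X * ?Q) $$ (a, b) = (\<Sum>s<n. X $$ (a, s) * ?Q $$ (s, b))" by (rule mult_entry[OF X Q that])
    also have "\<dots> = mv ?Q (\<lambda>s. X $$ (a, s)) b" unfolding mv_def using Q that projm_symm[of n q bq]
      unfolding symm_def by (auto simp: mult.commute intro!: sum.cong)
    finally show ?thesis .
  qed
  have "fip (X * ?Q) (X * ?Q) = (\<Sum>a<m. ip n (mv ?Q (\<lambda>s. X $$ (a, s))) (mv ?Q (\<lambda>s. X $$ (a, s))))"
  proof -
    have d: "dim_row (X * ?Q) = m" "dim_col (X * ?Q) = n" using XQ by auto
    show ?thesis unfolding fip_def ip_def d using ent by (simp del: index_mult_mat(1))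
  qed
  also have "\<dots> = (\<Sum>a<m. \<Sum>j<q. (ip n (bq j) (\<lambda>s. X $$ (a, s)))\<^sup>2)" by (simp add: projm_norm[OF o])
  also have "\<dots> = (\<Sum>j<q. \<Sum>a<m. (mv X (bq j) a)\<^sup>2)"
    by (subst sum.swap) (use X in \<open>simp add: ip_def mv_def mult.commute\<close>)
  also have "\<dots> = (\<Sum>j<q. ip m (mv X (bq j)) (mv X (bq j)))" by (simp add: ip_def power2_eq_square)
  also have "\<dots> \<le> (\<Sum>j<q. ip n (bq j) (bq j))" by (intro sum_mono) (use Xb in auto)
  also have "\<dots> = real q" using o unfolding orthon_def by simp
  finally show ?thesis .
qed

lemma frob_left:
  assumes C: "C \<in> carrier_mat m n" and o: "orthon m p a"
    and Cb: "\<forall>x. ip m (mv C x) (mv C x) \<le> ip n x x"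
  shows "fip (projm m p a * C) (projm m p a * C) \<le> real p"
proof -
  let ?P = "projm m p a"
  have P: "?P \<in> carrier_mat m m" by (rule projm_carrier)
  have PC: "?P * C \<in> carrier_mat m n" using C P by simp
  have ent: "(?P * C) $$ (s, b) = mv ?P (\<lambda>t. C $$ (t, b)) s" if "s < m" "b < n" for s b
    using mult_entry[OF P C that] unfolding mv_def using P by simp
  have "fip (?P * C) (?P * C) = (\<Sum>s<m. \<Sum>b<n. (mv ?P (\<lambda>t. C $$ (t, b)) s)\<^sup>2)"
  proof -
    have d: "dim_row (?P * C) = m" "dim_col (?P * C) = n" using PC by auto
    show ?thesis unfolding fip_def d using ent by (simp del: index_mult_mat(1) add: power2_eq_square)
  qed
  also have "\<dots> = (\<Sum>b<n. ip m (mv ?P (\<lambda>t. C $$ (t, b))) (mv ?P (\<lambda>t. C $$ (t, b))))"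
    by (subst sum.swap) (simp add: ip_def power2_eq_square)
  also have "\<dots> = (\<Sum>b<n. \<Sum>i<p. (ip m (a i) (\<lambda>t. C $$ (t, b)))\<^sup>2)" by (simp add: projm_norm[OF o])
  also have "\<dots> = (\<Sum>i<p. \<Sum>b<n. (mv (transpose_mat C) (a i) b)\<^sup>2)"
    by (subst sum.swap) (use C in \<open>simp add: ip_def mv_def mult.commute\<close>)
  also have "\<dots> = (\<Sum>i<p. ip n (mv (transpose_mat C) (a i)) (mv (transpose_mat C) (a i)))"
    by (simp add: ip_def power2_eq_square)
  also have "\<dots> \<le> (\<Sum>i<p. ip m (a i) (a i))" by (intro sum_mono transpose_bound[OF C Cb])
  also have "\<dots> = real p" using o unfolding orthon_def by simp
  finally show ?thesis .
qed

lemma fip_sym: "X \<in> carrier_mat m n \<Longrightarrow> Y \<in> carrier_mat m n \<Longrightarrow> fip X Y = fip Y X"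
  unfolding fip_def by (simp add: mult.commute)

lemma proj_contract:
  assumes "orthon m p a"
  shows "ip m (mv (projm m p a) u) (mv (projm m p a) u) \<le> ip m u u"
    "ip m (\<lambda>t. u t - mv (projm m p a) u t) (\<lambda>t. u t - mv (projm m p a) u t) \<le> ip m u u"
  using projm_pyth[OF assms, of u] ip_nonneg by (metis le_add_same_cancel1 le_add_same_cancel2)+

lemma projc_symm: "symm m (1\<^sub>m m - projm m p a)"
  using projm_symm[of m p a] projm_carrier[of m p a] unfolding symm_def by (auto simp: minus_carrier_mat)

lemma projc_mv: "t < m \<Longrightarrow> mv (1\<^sub>m m - projm m p a) u t = u t - mv (projm m p a) u t"
  using mv_minus_mat[of "1\<^sub>m m" m m "projm m p a" t u] projm_carrier[of m p a] mv_one by auto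

lemma mult_contract:
  assumes A: "A \<in> carrier_mat a k" and B: "B \<in> carrier_mat k c"
    and Ab: "\<forall>u. ip a (mv A u) (mv A u) \<le> ip k u u" and Bb: "\<forall>x. ip k (mv B x) (mv B x) \<le> ip c x x"
  shows "\<forall>x. ip a (mv (A * B) x) (mv (A * B) x) \<le> ip c x x"
proof
  fix x
  have "ip a (mv (A * B) x) (mv (A * B) x) = ip a (mv A (mv B x)) (mv A (mv B x))"
    by (rule ip_cong) (use mv_mult_rect[OF A B] in auto)
  also have "\<dots> \<le> ip k (mv B x) (mv B x)" using Ab by auto
  also have "\<dots> \<le> ip c x x" using Bb by auto
  finally show "ip a (mv (A * B) x) (mv (A * B) x) \<le> ip c x x" .
qed

lemma decomp:
  assumes W: "W \<in> carrier_mat m n" and D: "D \<in> carrier_mat m n" and t: "0 < t"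
  shows "trace_norm D + trace_norm W - trace_norm (W + D) \<le> 3 * (t * fip D D + real (mrank W) / t) / 2"
proof -
  define r where "r = mrank W"
  obtain N f where Nf: "N \<le> r" "\<forall>b<n. inspan m N f (\<lambda>t. W $$ (t, b))"
    using col_basis[OF W] unfolding r_def by blast
  obtain p a where pa: "p \<le> N" "orthon m p a"
      "\<forall>j<N. \<forall>t<m. f j t = lc p (\<lambda>i. ip m (a i) (f j)) a t"
    using gram_schmidt[of N m f] by blast
  have colspan: "\<forall>t<m. W $$ (t, b) = lc p (\<lambda>i. ip m (a i) (\<lambda>t. W $$ (t, b))) a t" if "b < n" for b
    by (rule inspan_lc[OF pa(2) pa(3)]) (use Nf(2) that in auto)
  define P where "P = projm m p a"
  have Pc: "P \<in> carrier_mat m m" unfolding P_def by (rule projm_carrier)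
  have PS: "symm m P" unfolding P_def by (rule projm_symm)
  have PW: "P * W = W"
  proof (rule eq_matI)
    fix s b assume sb: "s < dim_row W" "b < dim_col W"
    then have s: "s < m" and b: "b < n" using W by auto
    have "(P * W) $$ (s, b) = (\<Sum>l<m. P $$ (s, l) * W $$ (l, b))" by (rule mult_entry[OF Pc W s b])
    also have "\<dots> = mv P (\<lambda>l. W $$ (l, b)) s" unfolding mv_def using Pc by simp
    also have "\<dots> = W $$ (s, b)" unfolding P_def by (rule projm_span[OF pa(2) colspan[OF b] s])
    finally show "(P * W) $$ (s, b) = W $$ (s, b)" .
  qed (use Pc W in auto)
  define g where "g i = (\<lambda>b. ip m (a i) (\<lambda>t. W $$ (t, b)))" for i
  obtain q bq where qb: "q \<le> p" "orthon n q bq"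
      "\<forall>j<p. \<forall>s<n. g j s = lc q (\<lambda>i. ip n (bq i) (g j)) bq s"
    using gram_schmidt[of p n g] by blast
  define Q where "Q = projm n q bq"
  have Qc: "Q \<in> carrier_mat n n" unfolding Q_def by (rule projm_carrier)
  have QS: "symm n Q" unfolding Q_def by (rule projm_symm)
  have WQ: "W * Q = W"
  proof (rule eq_matI)
    fix s b assume sb: "s < dim_row W" "b < dim_col W"
    then have s: "s < m" and b: "b < n" using W by auto
    have "(W * Q) $$ (s, b) = (\<Sum>l<n. W $$ (s, l) * Q $$ (l, b))" by (rule mult_entry[OF W Qc s b])
    also have "\<dots> = mv Q (\<lambda>l. W $$ (s, l)) b" unfolding mv_def using Qc QS b unfolding symm_def
      by (auto simp: mult.commute intro!: sum.cong)
    also have "\<dots> = W $$ (s, b)"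
    proof -
      have rowspan: "\<forall>l<n. W $$ (s, l) = lc q (\<lambda>j. \<Sum>i<p. a i s * ip n (bq j) (g i)) bq l"
      proof (intro allI impI)
        fix l assume l: "l < n"
        have "W $$ (s, l) = (\<Sum>i<p. g i l * a i s)" using colspan[OF l] s unfolding lc_def g_def by simp
        also have "\<dots> = (\<Sum>i<p. (\<Sum>j<q. ip n (bq j) (g i) * bq j l) * a i s)"
          using qb(3) l unfolding lc_def by simp
        also have "\<dots> = (\<Sum>i<p. \<Sum>j<q. a i s * ip n (bq j) (g i) * bq j l)"
          by (simp add: sum_distrib_left sum_distrib_right ac_simps)
        also have "\<dots> = (\<Sum>j<q. \<Sum>i<p. a i s * ip n (bq j) (g i) * bq j l)" by (rule sum.swap)
        also have "\<dots> = lc q (\<lambda>j. \<Sum>i<p. a i s * ip n (bq j) (g i)) bq l"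
          unfolding lc_def by (simp add: sum_distrib_right)
        finally show "W $$ (s, l) = lc q (\<lambda>j. \<Sum>i<p. a i s * ip n (bq j) (g i)) bq l" .
      qed
      show ?thesis unfolding Q_def by (rule projm_span[OF qb(2) rowspan b])
    qed
    finally show "(W * Q) $$ (s, b) = W $$ (s, b)" .
  qed (use Qc W in auto)
  define IP where "IP = 1\<^sub>m m - P"
  define IQ where "IQ = 1\<^sub>m n - Q"
  have IPc: "IP \<in> carrier_mat m m" unfolding IP_def using Pc by (simp add: minus_carrier_mat)
  have IQc: "IQ \<in> carrier_mat n n" unfolding IQ_def using Qc by (simp add: minus_carrier_mat)
  have IPS: "symm m IP" unfolding IP_def P_def by (rule projc_symm)
  have IQS: "symm n IQ" unfolding IQ_def Q_def by (rule projc_symm)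
  have PT: "transpose_mat P = P" by (rule symm_transpose[OF PS])
  have QT: "transpose_mat Q = Q" by (rule symm_transpose[OF QS])
  have IPT: "transpose_mat IP = IP" by (rule symm_transpose[OF IPS])
  have IQT: "transpose_mat IQ = IQ" by (rule symm_transpose[OF IQS])
  have mvP: "ip m (mv P u) (mv P u) \<le> ip m u u" for u
    unfolding P_def by (rule proj_contract(1)[OF pa(2)])
  have mvIP: "ip m (mv IP u) (mv IP u) \<le> ip m u u" for u
  proof -
    have "ip m (mv IP u) (mv IP u) = ip m (\<lambda>t. u t - mv P u t) (\<lambda>t. u t - mv P u t)"
      by (rule ip_cong) (auto simp: IP_def P_def projc_mv)
    also have "\<dots> \<le> ip m u u" unfolding P_def by (rule proj_contract(2)[OF pa(2)])
    finally show ?thesis .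
  qed
  have WIQ: "W * IQ = 0\<^sub>m m n"
  proof -
    have "W * IQ = W * 1\<^sub>m n - W * Q" unfolding IQ_def by (rule mult_minus_distrib_mat[OF W _ Qc]) simp
    also have "\<dots> = 0\<^sub>m m n" unfolding WQ using W by (intro eq_matI) auto
    finally show ?thesis .
  qed
  obtain CW where CW: "CW \<in> carrier_mat m n" "\<forall>x. ip m (mv CW x) (mv CW x) \<le> ip n x x"
    "fip W CW = trace_norm W" using tn_attain[OF W] by blast
  define R where "R = IP * D * IQ"
  have Rc: "R \<in> carrier_mat m n" unfolding R_def using IPc D IQc by simp
  obtain CR where CR: "CR \<in> carrier_mat m n" "\<forall>x. ip m (mv CR x) (mv CR x) \<le> ip n x x"
    "fip R CR = trace_norm R" using tn_attain[OF Rc] by blast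
  define G1 where "G1 = P * CW * Q"
  define G2 where "G2 = IP * CR * IQ"
  have G1c: "G1 \<in> carrier_mat m n" unfolding G1_def using Pc CW Qc by simp
  have G2c: "G2 \<in> carrier_mat m n" unfolding G2_def using IPc CR IQc by simp
  have Gc: "G1 + G2 \<in> carrier_mat m n" using G1c G2c by simp
  have Gb: "\<forall>x. ip m (mv (G1 + G2) x) (mv (G1 + G2) x) \<le> 1\<^sup>2 * ip n x x"
  proof
    fix x
    define v where "v = mv CW (mv Q x)"
    define u where "u = mv CR (mv IQ x)"
    have e: "mv (G1 + G2) x s = mv P v s + (u s - mv P u s)" if s: "s < m" for s
    proof -
      have "mv (G1 + G2) x s = mv G1 x s + mv G2 x s" by (rule mv_add_mat[OF G1c G2c s])
      also have "mv G1 x s = mv (P * CW) (mv Q x) s"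
        unfolding G1_def by (rule mv_mult_rect[of _ m n]) (use Pc CW Qc s in auto)
      also have "\<dots> = mv P v s" unfolding v_def by (rule mv_mult_rect[OF Pc CW(1) s])
      also have "mv G2 x s = mv (IP * CR) (mv IQ x) s"
        unfolding G2_def by (rule mv_mult_rect[of _ m n]) (use IPc CR IQc s in auto)
      also have "\<dots> = mv IP u s" unfolding u_def by (rule mv_mult_rect[OF IPc CR(1) s])
      also have "\<dots> = u s - mv P u s" unfolding IP_def P_def using s by (rule projc_mv)
      finally show ?thesis .
    qed
    have "ip m (mv (G1 + G2) x) (mv (G1 + G2) x)
        = ip m (\<lambda>s. mv P v s + (u s - mv P u s)) (\<lambda>s. mv P v s + (u s - mv P u s))"
      by (rule ip_cong) (use e in auto)
    also have "\<dots> = ip m (mv P v) (mv P v) + 2 * ip m (mv P v) (\<lambda>s. u s - mv P u s)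
        + ip m (\<lambda>s. u s - mv P u s) (\<lambda>s. u s - mv P u s)"
      unfolding ip_add_left ip_add_right by (simp add: ip_sym)
    also have "ip m (mv P v) (\<lambda>s. u s - mv P u s) = 0" unfolding P_def by (rule projm_ip_perp[OF pa(2)])
    also have "ip m (\<lambda>s. u s - mv P u s) (\<lambda>s. u s - mv P u s) = ip m (mv IP u) (mv IP u)"
      by (rule ip_cong) (auto simp: IP_def P_def projc_mv)
    finally have "ip m (mv (G1 + G2) x) (mv (G1 + G2) x) \<le> ip m v v + ip m u u"
      using mvP[of v] mvIP[of u] by simp
    also have "\<dots> \<le> ip n (mv Q x) (mv Q x) + ip n (mv IQ x) (mv IQ x)"
      unfolding u_def v_def using CW(2) CR(2) by (intro add_mono) auto
    also have "ip n (mv IQ x) (mv IQ x) = ip n (\<lambda>s. x s - mv Q x s) (\<lambda>s. x s - mv Q x s)"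
      by (rule ip_cong) (auto simp: IQ_def Q_def projc_mv)
    also have "ip n (mv Q x) (mv Q x) + \<dots> = ip n x x"
      unfolding Q_def by (rule projm_pyth[OF qb(2), symmetric])
    finally show "ip m (mv (G1 + G2) x) (mv (G1 + G2) x) \<le> 1\<^sup>2 * ip n x x" by simp
  qed
  have WDc: "W + D \<in> carrier_mat m n" using W D by simp
  have up: "fip (W + D) (G1 + G2) \<le> trace_norm (W + D)"
    using tn_upper[OF WDc Gc _ Gb] by simp
  have split: "fip (W + D) (G1 + G2) = fip W G1 + fip W G2 + fip D G1 + fip D G2"
    using fip_add_left[OF W D] fip_add_right[OF G1c G2c W] fip_add_right[OF G1c G2c D] by simp
  have PCW: "P * CW \<in> carrier_mat m n" using Pc CW by simp
  have IPCR: "IP * CR \<in> carrier_mat m n" using IPc CR by simp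
  have fWG1: "fip W G1 = trace_norm W"
  proof -
    have "fip W G1 = fip (P * CW * Q) W" unfolding G1_def by (rule fip_sym[OF W]) (use G1c G1_def in simp)
    also have "\<dots> = fip (P * CW) (W * transpose_mat Q)" by (rule fip_mult_right[OF PCW Qc W])
    also have "\<dots> = fip CW (transpose_mat P * W)" unfolding QT WQ by (rule fip_mult_left[OF Pc CW(1) W])
    also have "\<dots> = fip W CW" unfolding PT PW by (rule fip_sym[OF CW(1) W])
    finally show ?thesis using CW(3) by simp
  qed
  have fWG2: "fip W G2 = 0"
  proof -
    have "fip W G2 = fip (IP * CR * IQ) W" unfolding G2_def by (rule fip_sym[OF W]) (use G2c G2_def in simp)
    also have "\<dots> = fip (IP * CR) (W * transpose_mat IQ)" by (rule fip_mult_right[OF IPCR IQc W])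
    also have "\<dots> = 0" unfolding IQT WIQ unfolding fip_def using IPc CR(1) by simp
    finally show ?thesis .
  qed
  have fDG2: "fip D G2 = trace_norm R"
  proof -
    have "fip D G2 = fip (IP * CR * IQ) D" unfolding G2_def by (rule fip_sym[OF D]) (use G2c G2_def in simp)
    also have "\<dots> = fip (IP * CR) (D * transpose_mat IQ)" by (rule fip_mult_right[OF IPCR IQc D])
    also have "\<dots> = fip CR (transpose_mat IP * (D * IQ))" unfolding IQT
      by (rule fip_mult_left[OF IPc CR(1)]) (use D IQc in simp)
    also have "transpose_mat IP * (D * IQ) = R" unfolding IPT R_def using IPc D IQc by simp
    also have "fip CR R = fip R CR" by (rule fip_sym[OF CR(1) Rc])
    finally show ?thesis using CR(3) by simp
  qed
  have rpos: "real p \<le> real r" "real q \<le> real r" using pa(1) qb(1) Nf(1) by auto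
  have fDD0: "0 \<le> fip D D" unfolding fip_def by (intro sum_nonneg) auto
  have bnd: "(t * fip D D + real k / t) / 2 \<le> (t * fip D D + real r / t) / 2" if "real k \<le> real r" for k
    using that t by (simp add: divide_right_mono)
  have fDG1: "- fip D G1 \<le> (t * fip D D + real r / t) / 2"
  proof -
    have "\<bar>fip D G1\<bar> \<le> (t * fip D D + fip G1 G1 / t) / 2" by (rule fip_amgm[OF t D G1c])
    also have "fip G1 G1 \<le> real q" unfolding G1_def Q_def
      by (rule frob_right[OF PCW qb(2) mult_contract[OF Pc CW(1) _ CW(2)]]) (use mvP in auto)
    then have "(t * fip D D + fip G1 G1 / t) / 2 \<le> (t * fip D D + real q / t) / 2"
      using t by (simp add: divide_right_mono)
    finally show ?thesis using bnd[OF rpos(2)] by linarith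
  qed
  define E1 where "E1 = P * D"
  define E2 where "E2 = IP * D * Q"
  have E1c: "E1 \<in> carrier_mat m n" unfolding E1_def using Pc D by simp
  have E2c: "E2 \<in> carrier_mat m n" unfolding E2_def using IPc D Qc by simp
  have Dsplit: "D = R + E1 + E2"
  proof -
    have IPD: "IP * D = D - P * D"
      unfolding IP_def using minus_mult_distrib_mat[of "1\<^sub>m m" m m P D n] Pc D by simp
    have R': "R = IP * D - IP * D * Q"
    proof -
      have "R = IP * D * 1\<^sub>m n - IP * D * Q" unfolding R_def IQ_def
        by (rule mult_minus_distrib_mat) (use IPc D Qc in auto)
      then show ?thesis using IPc D by simp
    qed
    show ?thesis unfolding R' E1_def E2_def IPD using D Pc Qc by (intro eq_matI) auto
  qed
  have tD: "trace_norm D \<le> trace_norm R + trace_norm E1 + trace_norm E2"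
  proof -
    have "trace_norm D \<le> trace_norm (R + E1) + trace_norm E2"
      using tn_triangle[of "R + E1" m n E2] Rc E1c E2c Dsplit by simp
    also have "trace_norm (R + E1) \<le> trace_norm R + trace_norm E1" by (rule tn_triangle[OF Rc E1c])
    finally show ?thesis by simp
  qed
  have tE1: "trace_norm E1 \<le> (t * fip D D + real r / t) / 2"
  proof -
    obtain C1 where C1: "C1 \<in> carrier_mat m n" "\<forall>x. ip m (mv C1 x) (mv C1 x) \<le> ip n x x"
      "fip E1 C1 = trace_norm E1" using tn_attain[OF E1c] by blast
    have "trace_norm E1 = fip D (P * C1)"
      using C1(3) fip_mult_left[OF Pc D C1(1)] unfolding E1_def PT by simp
    also have "\<dots> \<le> \<bar>fip D (P * C1)\<bar>" by simp
    also have "\<dots> \<le> (t * fip D D + fip (P * C1) (P * C1) / t) / 2" by (rule fip_amgm[OF t D]) (use Pc C1 in simp)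
    also have "fip (P * C1) (P * C1) \<le> real p" unfolding P_def by (rule frob_left[OF C1(1) pa(2) C1(2)])
    then have "(t * fip D D + fip (P * C1) (P * C1) / t) / 2 \<le> (t * fip D D + real p / t) / 2"
      using t by (simp add: divide_right_mono)
    finally show ?thesis using bnd[OF rpos(1)] by linarith
  qed
  have tE2: "trace_norm E2 \<le> (t * fip D D + real r / t) / 2"
  proof -
    obtain C2 where C2: "C2 \<in> carrier_mat m n" "\<forall>x. ip m (mv C2 x) (mv C2 x) \<le> ip n x x"
      "fip E2 C2 = trace_norm E2" using tn_attain[OF E2c] by blast
    have IPD: "IP * D \<in> carrier_mat m n" using IPc D by simp
    have IPC2: "IP * C2 \<in> carrier_mat m n" using IPc C2 by simp
    have "trace_norm E2 = fip (IP * D) (C2 * Q)"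
      using C2(3) fip_mult_right[OF IPD Qc C2(1)] unfolding E2_def QT by simp
    also have "\<dots> = fip D (IP * (C2 * Q))"
      using fip_mult_left[OF IPc D, of "C2 * Q"] C2(1) Qc unfolding IPT by simp
    also have "IP * (C2 * Q) = IP * C2 * Q" using IPc C2(1) Qc by simp
    also have "fip D (IP * C2 * Q) \<le> \<bar>fip D (IP * C2 * Q)\<bar>" by simp
    also have "\<dots> \<le> (t * fip D D + fip (IP * C2 * Q) (IP * C2 * Q) / t) / 2"
      by (rule fip_amgm[OF t D]) (use IPc C2 Qc in simp)
    also have "fip (IP * C2 * Q) (IP * C2 * Q) \<le> real q" unfolding Q_def
      by (rule frob_right[OF IPC2 qb(2) mult_contract[OF IPc C2(1) _ C2(2)]]) (use mvIP in auto)
    then have "(t * fip D D + fip (IP * C2 * Q) (IP * C2 * Q) / t) / 2 \<le> (t * fip D D + real q / t) / 2"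
      using t by (simp add: divide_right_mono)
    finally show ?thesis using bnd[OF rpos(2)] by linarith
  qed
  have "trace_norm D + trace_norm W - trace_norm (W + D) \<le> 3 * (t * fip D D + real r / t) / 2"
  proof -
    define K where "K = (t * fip D D + real r / t) / 2"
    have k: "- fip D G1 \<le> K" "trace_norm E1 \<le> K" "trace_norm E2 \<le> K"
      using fDG1 tE1 tE2 unfolding K_def by auto
    have "trace_norm D + trace_norm W - trace_norm (W + D) \<le> 3 * K"
      using up split fWG1 fWG2 fDG2 k tD by linarith
    then show ?thesis unfolding K_def by simp
  qed
  then show ?thesis unfolding r_def .
qed

definition pl :: "(nat \<Rightarrow> nat) \<Rightarrow> nat \<Rightarrow> nat" where
  "pl b m = (\<Prod>l<m. b l)"

lemma pl_Suc: "pl b (Suc m) = pl b m * b m" unfolding pl_def by simp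

lemma pl_pos: "(\<forall>l<m. 0 < b l) \<Longrightarrow> 0 < pl b m" unfolding pl_def by (auto intro: prod_pos)

lemma pl_dvd: "m \<le> L \<Longrightarrow> pl b m dvd pl b L"
  unfolding pl_def by (rule prod_dvd_prod_subset) auto

lemma radix1: "(\<Sum>m<L. ((j div pl b m) mod b m) * pl b m) = j mod pl b L"
proof (induction L)
  case 0
  then show ?case by (simp add: pl_def)
next
  case (Suc L)
  have "j mod pl b (Suc L) = pl b L * (j div pl b L mod b L) + j mod pl b L"
    unfolding pl_Suc by (rule mod_mult2_eq)
  then show ?case using Suc by (simp add: ac_simps)
qed

lemma radix2:
  assumes pos: "\<forall>l<L. 0 < b l" and d: "\<forall>m<L. d m < b m"
  shows "(\<Sum>m<L. d m * pl b m) < pl b L \<and> (\<forall>m'<L. ((\<Sum>m<L. d m * pl b m) div pl b m') mod b m' = d m')"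
  using assms
proof (induction L)
  case 0
  then show ?case by (simp add: pl_def)
next
  case (Suc L)
  define J where "J = (\<Sum>m<L. d m * pl b m)"
  from Suc have IH: "J < pl b L" "\<forall>m'<L. (J div pl b m') mod b m' = d m'" unfolding J_def by auto
  have S: "(\<Sum>m<Suc L. d m * pl b m) = J + d L * pl b L" unfolding J_def by simp
  have bL: "0 < b L" "d L < b L" using Suc.prems by auto
  have plp: "0 < pl b m'" if "m' \<le> Suc L" for m' using pl_pos[of m' b] Suc.prems that by auto
  have bound: "J + d L * pl b L < pl b (Suc L)"
  proof -
    have "J + d L * pl b L < pl b L + d L * pl b L" using IH(1) by simp
    also have "\<dots> = (d L + 1) * pl b L" by simp
    also have "\<dots> \<le> b L * pl b L" using bL by (intro mult_right_mono) auto
    finally show ?thesis unfolding pl_Suc by (simp add: mult.commute)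
  qed
  have digits: "((J + d L * pl b L) div pl b m') mod b m' = d m'" if m': "m' < Suc L" for m'
  proof (cases "m' = L")
    case True
    have "(J + d L * pl b L) div pl b L = d L + J div pl b L"
      using plp[of L] by simp
    also have "J div pl b L = 0" using IH(1) by simp
    finally show ?thesis using True bL by simp
  next
    case False
    then have m'L: "m' < L" using m' by simp
    obtain c where c: "pl b L = pl b (Suc m') * c" using pl_dvd[of "Suc m'" L b] m'L by (auto elim: dvdE)
    have e: "d L * pl b L = (d L * c * b m') * pl b m'" unfolding c pl_Suc by (simp add: ac_simps)
    have "(J + d L * pl b L) div pl b m' = (J + (d L * c * b m') * pl b m') div pl b m'" unfolding e ..
    also have "\<dots> = d L * c * b m' + J div pl b m'"
      by (rule div_mult_self1) (use plp[of m'] m'L in simp)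
    finally have "(J + d L * pl b L) div pl b m' = d L * c * b m' + J div pl b m'" .
    then have "((J + d L * pl b L) div pl b m') mod b m' = (J div pl b m') mod b m'"
      by (simp add: mod_add_left_eq[symmetric])
    also have "\<dots> = d m'" using IH(2) m'L by simp
    finally show ?thesis .
  qed
  show ?case unfolding S using bound digits by blast
qed

definition bk :: "(nat \<Rightarrow> nat) \<Rightarrow> nat \<Rightarrow> nat \<Rightarrow> nat" where
  "bk n k l = (if l = k then 1 else n l)"

lemma prod_excl: "(\<Prod>l\<in>{l. l < m \<and> l \<noteq> k}. n l) = pl (bk n k) m"
proof -
  have "pl (bk n k) m = (\<Prod>l\<in>{l. l < m \<and> l \<noteq> k}. bk n k l)"
    unfolding pl_def by (rule prod.mono_neutral_right) (auto simp: bk_def)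
  also have "\<dots> = (\<Prod>l\<in>{l. l < m \<and> l \<noteq> k}. n l)" by (rule prod.cong) (auto simp: bk_def)
  finally show ?thesis by simp
qed

lemma prod_excl_K: "(\<Prod>l\<in>{l. l < K \<and> l \<noteq> k}. n l) = pl (bk n k) K" by (rule prod_excl)

definition enc :: "nat \<Rightarrow> (nat \<Rightarrow> nat) \<Rightarrow> nat \<Rightarrow> (nat \<Rightarrow> nat) \<Rightarrow> nat" where
  "enc K n k i = (\<Sum>m<K. (if m = k then 0 else i m) * pl (bk n k) m)"

lemma unfold_idx_alt:
  "m < K \<Longrightarrow> m \<noteq> k \<Longrightarrow> unfold_idx K n k r j m = (j div pl (bk n k) m) mod n m"
  unfolding unfold_idx_def prod_excl by simp

lemma tensor_sum:
  assumes k: "k < K" and pos: "\<forall>l<K. 0 < n l"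
  shows "(\<Sum>i\<in>tensor_idx K n. F i) = (\<Sum>r<n k. \<Sum>j<pl (bk n k) K. F (unfold_idx K n k r j))"
proof -
  let ?b = "bk n k"
  have bpos: "\<forall>l<K. 0 < ?b l" using pos by (auto simp: bk_def)
  let ?T = "{..<n k} \<times> {..<pl ?b K}"
  have inv: "unfold_idx K n k (i k) (enc K n k i) = i \<and> (i k, enc K n k i) \<in> ?T" if i: "i \<in> tensor_idx K n" for i
  proof -
    define d where "d m = (if m = k then 0 else i m)" for m
    have d: "\<forall>m<K. d m < ?b m" using i unfolding d_def bk_def tensor_idx_def by auto
    have encd: "enc K n k i = (\<Sum>m<K. d m * pl ?b m)" unfolding enc_def d_def ..
    note R = radix2[OF bpos d, folded encd]
    have A: "(i k, enc K n k i) \<in> ?T" using i R k unfolding tensor_idx_def by auto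
    have B: "unfold_idx K n k (i k) (enc K n k i) = i"
    proof (rule ext)
      fix m
      show "unfold_idx K n k (i k) (enc K n k i) m = i m"
      proof (cases "m = k")
        case True then show ?thesis unfolding unfold_idx_def by simp
      next
        case False
        show ?thesis
        proof (cases "m < K")
          case True
          have "unfold_idx K n k (i k) (enc K n k i) m = (enc K n k i div pl ?b m) mod ?b m"
            using unfold_idx_alt[OF True False] False by (simp add: bk_def)
          also have "\<dots> = d m" using R True by auto
          finally show ?thesis using False unfolding d_def by simp
        next
          case nK: False
          then show ?thesis using i False unfolding unfold_idx_def tensor_idx_def by auto
        qed
      qed
    qed
    show ?thesis using A B by simp
  qed
  have "(\<Sum>r<n k. \<Sum>j<pl ?b K. F (unfold_idx K n k r j)) = (\<Sum>(r, j)\<in>?T. F (unfold_idx K n k r j))"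
    by (rule sum.cartesian_product)
  also have "\<dots> = (\<Sum>i\<in>tensor_idx K n. F i)"
  proof (rule sum.reindex_bij_witness[where i = "\<lambda>i. (i k, enc K n k i)" and j = "\<lambda>(r, j). unfold_idx K n k r j"])
    fix i assume i: "i \<in> tensor_idx K n"
    show "(i k, enc K n k i) \<in> ?T" using inv[OF i] by simp
    show "(case (i k, enc K n k i) of (r, j) \<Rightarrow> unfold_idx K n k r j) = i" using inv[OF i] by simp
  next
    fix p assume p: "p \<in> ?T"
    obtain r j where rj: "p = (r, j)" "r < n k" "j < pl ?b K" using p by auto
    let ?i = "unfold_idx K n k r j"
    have mem: "?i \<in> tensor_idx K n"
      unfolding tensor_idx_def
    proof (intro CollectI conjI allI impI)
      fix m assume m: "m < K"
      show "?i m < n m"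
      proof (cases "m = k")
        case True then show ?thesis using rj unfolding unfold_idx_def by simp
      next
        case False then show ?thesis using unfold_idx_alt[OF m False] pos m by simp
      qed
    next
      fix m assume "K \<le> m" then show "?i m = 0" using k unfolding unfold_idx_def by auto
    qed
    then show "(case p of (r, j) \<Rightarrow> unfold_idx K n k r j) \<in> tensor_idx K n" using rj by simp
    have "enc K n k ?i = (\<Sum>m<K. ((j div pl ?b m) mod ?b m) * pl ?b m)"
      unfolding enc_def
    proof (intro sum.cong refl)
      fix m assume "m \<in> {..<K}"
      then show "(if m = k then 0 else ?i m) * pl ?b m = ((j div pl ?b m) mod ?b m) * pl ?b m"
        using unfold_idx_alt[of m K k n r j] by (auto simp: bk_def)
    qed
    also have "\<dots> = j mod pl ?b K" by (rule radix1)
    also have "\<dots> = j" using rj by simp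
    finally show "((case p of (r, j) \<Rightarrow> unfold_idx K n k r j) k, enc K n k (case p of (r, j) \<Rightarrow> unfold_idx K n k r j)) = p"
      using rj unfolding unfold_idx_def by simp
  qed (auto split: prod.splits)
  finally show ?thesis by simp
qed

definition tin :: "nat \<Rightarrow> (nat \<Rightarrow> nat) \<Rightarrow> tensor \<Rightarrow> tensor \<Rightarrow> real" where
  "tin K n T S = (\<Sum>i\<in>tensor_idx K n. T i * S i)"

lemma unf_carrier: "unfold_mode K n T k \<in> carrier_mat (n k) (pl (bk n k) K)"
  unfolding unfold_mode_def prod_excl by simp

lemma tin_fip:
  assumes k: "k < K" and pos: "\<forall>l<K. 0 < n l"
  shows "tin K n T S = fip (unfold_mode K n T k) (unfold_mode K n S k)"
proof -
  have "tin K n T S = (\<Sum>r<n k. \<Sum>j<pl (bk n k) K. T (unfold_idx K n k r j) * S (unfold_idx K n k r j))"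
    unfolding tin_def by (rule tensor_sum[OF k pos])
  also have "\<dots> = fip (unfold_mode K n T k) (unfold_mode K n S k)"
    unfolding fip_def using unf_carrier[of K n T k] by (simp add: unfold_mode_def prod_excl)
  finally show ?thesis .
qed

lemma frob_sq: "(frob K n T)\<^sup>2 = tin K n T T"
proof -
  have "0 \<le> (\<Sum>i\<in>tensor_idx K n. (T i)\<^sup>2)" by (intro sum_nonneg) auto
  then show ?thesis unfolding frob_def tin_def by (simp add: power2_eq_square)
qed

lemma unf_diff: "unfold_mode K n (\<lambda>i. T i - S i) k = unfold_mode K n T k - unfold_mode K n S k"
  unfolding unfold_mode_def by (intro eq_matI) auto

lemma unf_neg: "unfold_mode K n (\<lambda>i. S i - T i) k = unfold_mode K n S k - unfold_mode K n T k"
  by (rule unf_diff)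

lemma fip_minus_right: "X \<in> carrier_mat m n \<Longrightarrow> A \<in> carrier_mat m n \<Longrightarrow> B \<in> carrier_mat m n \<Longrightarrow>
    fip X (A - B) = fip X A - fip X B"
  unfolding fip_def by (simp add: right_diff_distrib sum_subtractf)

lemma spec_diff_bound:
  assumes A: "A \<in> carrier_mat m n" and B: "B \<in> carrier_mat m n"
    and sA: "spec_norm A \<le> al" and sB: "spec_norm B \<le> al"
  shows "\<forall>x. ip m (mv (A - B) x) (mv (A - B) x) \<le> (2 * al)\<^sup>2 * ip n x x"
proof
  fix x
  have bA: "ip m (mv A x) (mv A x) \<le> al\<^sup>2 * ip n x x"
  proof -
    have "ip m (mv A x) (mv A x) \<le> (spec_norm A)\<^sup>2 * ip n x x" using spec_bound[OF A] by auto
    also have "\<dots> \<le> al\<^sup>2 * ip n x x" using spec_bound[OF A] sA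
      by (intro mult_right_mono power_mono ip_nonneg) auto
    finally show ?thesis .
  qed
  have bB: "ip m (mv B x) (mv B x) \<le> al\<^sup>2 * ip n x x"
  proof -
    have "ip m (mv B x) (mv B x) \<le> (spec_norm B)\<^sup>2 * ip n x x" using spec_bound[OF B] by auto
    also have "\<dots> \<le> al\<^sup>2 * ip n x x" using spec_bound[OF B] sB
      by (intro mult_right_mono power_mono ip_nonneg) auto
    finally show ?thesis .
  qed
  have "ip m (mv (A - B) x) (mv (A - B) x) = ip m (\<lambda>t. mv A x t - mv B x t) (\<lambda>t. mv A x t - mv B x t)"
    by (rule ip_cong) (simp_all add: mv_minus_mat[OF A B])
  also have "\<dots> \<le> 2 * ip m (mv A x) (mv A x) + 2 * ip m (mv B x) (mv B x)"
  proof -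
    have e: "(a - b) * (a - b) \<le> 2 * (a * a) + 2 * (b * b)" for a b :: real
    proof -
      have "0 \<le> (a + b) * (a + b)" by simp
      then show ?thesis by (simp add: algebra_simps)
    qed
    have "ip m (\<lambda>t. mv A x t - mv B x t) (\<lambda>t. mv A x t - mv B x t)
        \<le> (\<Sum>t<m. 2 * (mv A x t * mv A x t) + 2 * (mv B x t * mv B x t))"
      unfolding ip_def by (rule sum_mono) (rule e)
    also have "\<dots> = 2 * ip m (mv A x) (mv A x) + 2 * ip m (mv B x) (mv B x)"
      unfolding ip_def by (simp only: sum.distrib sum_distrib_left)
    finally show ?thesis .
  qed
  also have "\<dots> \<le> 2 * (al\<^sup>2 * ip n x x) + 2 * (al\<^sup>2 * ip n x x)" using bA bB by (simp add: mult.commute)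
  finally show "ip m (mv (A - B) x) (mv (A - B) x) \<le> (2 * al)\<^sup>2 * ip n x x" by (simp add: power_mult_distrib ac_simps)
qed

theorem theorem2:
  "\<exists>c::real. \<forall>(K::nat) (n::nat \<Rightarrow> nat) (\<alpha>::real) (lam::real) (Y::tensor) (E::tensor)
      (Wstar::nat \<Rightarrow> tensor) (What::nat \<Rightarrow> tensor).
    (\<forall>k<K. 0 < n k) \<longrightarrow> 0 \<le> \<alpha> \<longrightarrow> 0 < lam \<longrightarrow>
    (\<forall>i. Y i = (\<Sum>k<K. Wstar k i) + E i) \<longrightarrow>
    (\<forall>k<K. \<forall>l<K. k \<noteq> l \<longrightarrow> spec_norm (unfold_mode K n (Wstar l) k) \<le> \<alpha>) \<longrightarrow>
    (\<forall>k<K. \<forall>l<K. l \<noteq> k \<longrightarrow> spec_norm (unfold_mode K n (What k) l) \<le> \<alpha>) \<longrightarrow>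
    (\<forall>V::nat \<Rightarrow> tensor.
        (\<forall>k<K. \<forall>l<K. l \<noteq> k \<longrightarrow> spec_norm (unfold_mode K n (V k) l) \<le> \<alpha>) \<longrightarrow>
        1/2 * (frob K n (\<lambda>i. Y i - (\<Sum>k<K. What k i)))\<^sup>2
          + lam * (\<Sum>k<K. trace_norm (unfold_mode K n (What k) k))
        \<le> 1/2 * (frob K n (\<lambda>i. Y i - (\<Sum>k<K. V k i)))\<^sup>2
          + lam * (\<Sum>k<K. trace_norm (unfold_mode K n (V k) k))) \<longrightarrow>
    lam \<ge> 2 * Max ((\<lambda>k. spec_norm (unfold_mode K n E k)) ` {..<K}) + \<alpha> * (real K - 1) \<longrightarrow>
    (\<Sum>k<K. (frob K n (\<lambda>i. What k i - Wstar k i))\<^sup>2)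
      \<le> c * lam\<^sup>2 * (\<Sum>k<K. real (mrank (unfold_mode K n (Wstar k) k)))"
proof (rule exI[of _ 36], intro allI impI)
  fix K :: nat and n :: "nat \<Rightarrow> nat" and al lam :: real and Y E :: tensor and Wstar What :: "nat \<Rightarrow> tensor"
  assume pos: "\<forall>k<K. 0 < n k" and al0: "0 \<le> al" and lam0: "0 < lam"
    and Ydef: "\<forall>i. Y i = (\<Sum>k<K. Wstar k i) + E i"
    and Wsb: "\<forall>k<K. \<forall>l<K. k \<noteq> l \<longrightarrow> spec_norm (unfold_mode K n (Wstar l) k) \<le> al"
    and Whb: "\<forall>k<K. \<forall>l<K. l \<noteq> k \<longrightarrow> spec_norm (unfold_mode K n (What k) l) \<le> al"
    and opt: "\<forall>V::nat \<Rightarrow> tensor.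
        (\<forall>k<K. \<forall>l<K. l \<noteq> k \<longrightarrow> spec_norm (unfold_mode K n (V k) l) \<le> al) \<longrightarrow>
        1/2 * (frob K n (\<lambda>i. Y i - (\<Sum>k<K. What k i)))\<^sup>2
          + lam * (\<Sum>k<K. trace_norm (unfold_mode K n (What k) k))
        \<le> 1/2 * (frob K n (\<lambda>i. Y i - (\<Sum>k<K. V k i)))\<^sup>2
          + lam * (\<Sum>k<K. trace_norm (unfold_mode K n (V k) k))"
    and lamb: "lam \<ge> 2 * Max ((\<lambda>k. spec_norm (unfold_mode K n E k)) ` {..<K}) + al * (real K - 1)"
  show "(\<Sum>k<K. (frob K n (\<lambda>i. What k i - Wstar k i))\<^sup>2)
      \<le> 36 * lam\<^sup>2 * (\<Sum>k<K. real (mrank (unfold_mode K n (Wstar k) k)))"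
  proof (cases "K = 0")
    case True then show ?thesis by simp
  next
    case False
    then have K0: "0 < K" by simp
    define U where "U T k = unfold_mode K n T k" for T k
    define Nk where "Nk k = pl (bk n k) K" for k
    have Uc: "U T k \<in> carrier_mat (n k) (Nk k)" for T k unfolding U_def Nk_def by (rule unf_carrier)
    define D where "D k = (\<lambda>i. What k i - Wstar k i)" for k
    define f where "f k = tin K n (D k) (D k)" for k
    define tau where "tau k = trace_norm (U (D k) k)" for k
    define ah where "ah k = trace_norm (U (What k) k)" for k
    define bs where "bs k = trace_norm (U (Wstar k) k)" for k
    define rr where "rr k = real (mrank (U (Wstar k) k))" for k
    define mx where "mx = Max ((\<lambda>k. spec_norm (U E k)) ` {..<K})"
    define SD where "SD i = (\<Sum>k<K. D k i)" for i
    have tau0: "0 \<le> tau k" for k unfolding tau_def by (rule tn_nonneg[OF Uc])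
    have mxge: "spec_norm (U E k) \<le> mx" if "k < K" for k
      unfolding mx_def using that by (intro Max_ge) auto
    have mx0: "0 \<le> mx" using mxge[OF K0] spec_bound[OF Uc[of E 0]] by linarith
    have lamb': "mx + al * (real K - 1) \<le> lam" using lamb mx0 unfolding mx_def U_def by linarith
    have feq1: "(\<lambda>i. Y i - (\<Sum>k<K. What k i)) = (\<lambda>i. E i - SD i)"
      using Ydef unfolding SD_def D_def by (auto simp: sum_subtractf)
    have feq2: "(\<lambda>i. Y i - (\<Sum>k<K. Wstar k i)) = E" using Ydef by auto
    have feas: "\<forall>k<K. \<forall>l<K. l \<noteq> k \<longrightarrow> spec_norm (unfold_mode K n (Wstar k) l) \<le> al"
      using Wsb by auto
    have opt1: "1/2 * tin K n (\<lambda>i. E i - SD i) (\<lambda>i. E i - SD i) + lam * (\<Sum>k<K. ah k)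
        \<le> 1/2 * tin K n E E + lam * (\<Sum>k<K. bs k)"
      using mp[OF spec[OF opt, of Wstar] feas] unfolding feq1 feq2 frob_sq ah_def bs_def U_def .
    have exp: "tin K n (\<lambda>i. E i - SD i) (\<lambda>i. E i - SD i) = tin K n E E - 2 * tin K n E SD + tin K n SD SD"
      unfolding tin_def by (simp add: algebra_simps sum.distrib sum_subtractf sum_distrib_left)
    have S3: "1/2 * tin K n SD SD \<le> tin K n E SD + lam * ((\<Sum>k<K. bs k) - (\<Sum>k<K. ah k))"
      using opt1 unfolding exp by (simp add: algebra_simps)
    have S4: "tin K n E SD = (\<Sum>k<K. tin K n E (D k))"
      unfolding tin_def SD_def by (simp add: sum_distrib_left) (rule sum.swap)
    have S5: "tin K n E (D k) \<le> mx * tau k" if k: "k < K" for k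
    proof -
      have "tin K n E (D k) = fip (U E k) (U (D k) k)" unfolding U_def by (rule tin_fip[OF k pos])
      also have "\<dots> = fip (U (D k) k) (U E k)" by (rule fip_sym[OF Uc Uc])
      also have "\<dots> \<le> tau k * spec_norm (U E k)"
        unfolding tau_def using spec_bound[OF Uc[of E k]] by (intro tn_upper[OF Uc Uc]) auto
      also have "\<dots> \<le> tau k * mx" by (intro mult_left_mono mxge k tau0)
      finally show ?thesis by (simp add: mult.commute)
    qed
    have S45: "tin K n E SD \<le> mx * (\<Sum>k<K. tau k)"
      unfolding S4 sum_distrib_left by (intro sum_mono S5) auto
    have S6: "tin K n SD SD = (\<Sum>k<K. \<Sum>l<K. tin K n (D k) (D l))"
    proof -
      have "tin K n SD SD = (\<Sum>i\<in>tensor_idx K n. \<Sum>k<K. \<Sum>l<K. D k i * D l i)"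
        unfolding tin_def SD_def by (simp add: sum_product)
      also have "\<dots> = (\<Sum>k<K. \<Sum>i\<in>tensor_idx K n. \<Sum>l<K. D k i * D l i)" by (rule sum.swap)
      also have "\<dots> = (\<Sum>k<K. \<Sum>l<K. \<Sum>i\<in>tensor_idx K n. D k i * D l i)"
        by (rule sum.cong[OF refl], rule sum.swap)
      finally show ?thesis unfolding tin_def .
    qed
    have S7: "- (2 * al) * tau k \<le> tin K n (D k) (D l)" if kl: "k < K" "l < K" "k \<noteq> l" for k l
    proof -
      have "tin K n (D k) (D l) = fip (U (D k) k) (U (D l) k)" unfolding U_def by (rule tin_fip[OF kl(1) pos])
      also have "U (D l) k = U (What l) k - U (Wstar l) k" unfolding U_def D_def by (rule unf_diff)
      finally have e: "tin K n (D k) (D l) = - fip (U (D k) k) (U (Wstar l) k - U (What l) k)"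
        using fip_minus_right[OF Uc Uc Uc] by simp
      have "fip (U (D k) k) (U (Wstar l) k - U (What l) k) \<le> tau k * (2 * al)"
        unfolding tau_def
      proof (rule tn_upper[OF Uc])
        show "U (Wstar l) k - U (What l) k \<in> carrier_mat (n k) (Nk k)" using Uc by (simp add: minus_carrier_mat)
        show "0 \<le> 2 * al" using al0 by simp
        show "\<forall>x. ip (n k) (mv (U (Wstar l) k - U (What l) k) x) (mv (U (Wstar l) k - U (What l) k) x)
            \<le> (2 * al)\<^sup>2 * ip (Nk k) x x"
          by (rule spec_diff_bound[OF Uc Uc]) (use Wsb Whb kl in \<open>auto simp: U_def\<close>)
      qed
      then show ?thesis using e by (simp add: mult.commute)
    qed
    have S8: "(\<Sum>k<K. f k) \<le> tin K n SD SD + 2 * al * (real K - 1) * (\<Sum>k<K. tau k)"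
    proof -
      have row: "f k - 2 * al * (real K - 1) * tau k \<le> (\<Sum>l<K. tin K n (D k) (D l))" if k: "k < K" for k
      proof -
        have "(\<Sum>l<K. tin K n (D k) (D l)) = f k + (\<Sum>l\<in>{..<K} - {k}. tin K n (D k) (D l))"
          unfolding f_def using k by (subst sum.remove[of _ k]) auto
        moreover have "(\<Sum>l\<in>{..<K} - {k}. - (2 * al) * tau k) \<le> (\<Sum>l\<in>{..<K} - {k}. tin K n (D k) (D l))"
          using S7 k by (intro sum_mono) auto
        moreover have "(\<Sum>l\<in>{..<K} - {k}. - (2 * al) * tau k) = - (2 * al) * tau k * (real K - 1)"
          using k K0 by (simp add: of_nat_diff)
        ultimately show ?thesis by (simp add: algebra_simps)
      qed
      have "(\<Sum>k<K. f k) - 2 * al * (real K - 1) * (\<Sum>k<K. tau k) = (\<Sum>k<K. f k - 2 * al * (real K - 1) * tau k)"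
        by (simp add: sum_subtractf sum_distrib_left)
      also have "\<dots> \<le> tin K n SD SD" unfolding S6 by (intro sum_mono row) auto
      finally show ?thesis by simp
    qed
    have St: "0 \<le> (\<Sum>k<K. tau k)" by (intro sum_nonneg tau0)
    have S9: "1/2 * (\<Sum>k<K. f k) \<le> lam * (\<Sum>k<K. tau k + bs k - ah k)"
    proof -
      have "(mx + al * (real K - 1)) * (\<Sum>k<K. tau k) \<le> lam * (\<Sum>k<K. tau k)"
        by (rule mult_right_mono[OF lamb' St])
      then have "1/2 * (\<Sum>k<K. f k) \<le> lam * (\<Sum>k<K. tau k) + lam * ((\<Sum>k<K. bs k) - (\<Sum>k<K. ah k))"
        using S8 S3 S45 by (simp add: algebra_simps)
      also have "\<dots> = lam * (\<Sum>k<K. tau k + bs k - ah k)"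
        by (simp add: sum.distrib sum_subtractf algebra_simps)
      finally show ?thesis .
    qed
    define t where "t = 1 / (6 * lam)"
    have t0: "0 < t" unfolding t_def using lam0 by simp
    have S10: "lam * (tau k + bs k - ah k) \<le> f k / 4 + 9 * lam\<^sup>2 * rr k" if k: "k < K" for k
    proof -
      have WD: "U (Wstar k) k + U (D k) k = U (What k) k"
        unfolding U_def D_def unfold_mode_def by (intro eq_matI) auto
      have ff: "fip (U (D k) k) (U (D k) k) = f k" unfolding f_def U_def by (rule tin_fip[OF k pos, symmetric])
      have "tau k + bs k - ah k \<le> 3 * (t * f k + rr k / t) / 2"
        using decomp[OF Uc[of "Wstar k" k] Uc[of "D k" k] t0] unfolding WD ff tau_def bs_def ah_def rr_def by simp
      then have "lam * (tau k + bs k - ah k) \<le> lam * (3 * (t * f k + rr k / t) / 2)"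
        using lam0 by (intro mult_left_mono) auto
      also have "\<dots> = f k / 4 + 9 * lam\<^sup>2 * rr k" unfolding t_def using lam0
        by (simp add: field_simps power2_eq_square)
      finally show ?thesis .
    qed
    have "lam * (\<Sum>k<K. tau k + bs k - ah k) = (\<Sum>k<K. lam * (tau k + bs k - ah k))"
      by (rule sum_distrib_left)
    also have "\<dots> \<le> (\<Sum>k<K. f k / 4 + 9 * lam\<^sup>2 * rr k)" by (rule sum_mono) (use S10 in auto)
    finally have "1/2 * (\<Sum>k<K. f k) \<le> (\<Sum>k<K. f k / 4 + 9 * lam\<^sup>2 * rr k)" using S9 by linarith
    moreover have "(\<Sum>k<K. f k / 4 + 9 * lam\<^sup>2 * rr k) = (\<Sum>k<K. f k) / 4 + 9 * lam\<^sup>2 * (\<Sum>k<K. rr k)"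
      by (simp add: sum.distrib sum_distrib_left sum_divide_distrib[symmetric])
    ultimately have "(\<Sum>k<K. f k) \<le> 36 * lam\<^sup>2 * (\<Sum>k<K. rr k)" by linarith
    moreover have "(\<Sum>k<K. (frob K n (\<lambda>i. What k i - Wstar k i))\<^sup>2) = (\<Sum>k<K. f k)"
      unfolding f_def D_def frob_sq ..
    ultimately show ?thesis unfolding rr_def U_def by simp
  qed

qed

end
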